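(* Let $\alpha>0$ and let $a_1,\dots,a_N,b_1,\dots,b_{N-1}$ be independent with $a_i\sim\mathcal N(0,\alpha)$, $b_i\ge0$, $b_i^2\sim\frac\alpha2\chi^2(2i/\alpha)$; let $c_i=(b_i^2-i)/\sqrt i$. Let $\theta_N=1+N^{-2/3}w_N$ with $w_N>0$, $(\log\log N)^2/w_N\to0$ and $w_N/(\log N)^2\to0$. For $1\le i\le N$ let $r_i=1+\sqrt{1-\frac{i-1}{N\theta_N^2}}$, $m_i=1-\sqrt{1-\frac{i-1}{N\theta_N^2}}$, $\gamma_i=m_i/r_i$; for $3\le i\le N$ let $\xi_i=\frac{a_i}{\sqrt N\theta_Nr_i}+\sqrt{\frac{m_i}{r_i}}\frac{c_{i-1}}{\sqrt N\theta_Nr_{i-1}}$, and let $L_2=0$, $L_i=\xi_i+\gamma_iL_{i-1}$. Then \[ \max_{3\le i\le N}|L_i|=o_{\mathbf P}(N^{-1/3}). \]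
   Context: For $d>0$, $\chi^2(d)$ has density $\frac{1}{2^{d/2}\Gamma(d/2)}x^{d/2-1}e^{-x/2}\mathbf 1_{x>0}$. $X_N=o_{\mathbf P}(c_N)$ means $X_N/c_N\to0$ in probability. *)

theory Defs
  imports "HOL-Probability.Probability"
begin

definition chi2_density :: "real \<Rightarrow> real \<Rightarrow> real" where
  "chi2_density d x = (if x > 0 then
      1 / (2 powr (d/2) * Gamma (d/2)) * x powr (d/2 - 1) * exp (-x/2) else 0)"

definition o_P :: "'a measure \<Rightarrow> (nat \<Rightarrow> 'a \<Rightarrow> real) \<Rightarrow> (nat \<Rightarrow> real) \<Rightarrow> bool" where
  "o_P M X c \<longleftrightarrow> (\<forall>\<epsilon>>0. ((\<lambda>N. measure M {x \<in> space M. \<bar>X N x / c N\<bar> > \<epsilon>}) \<longlongrightarrow> 0) sequentially)"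

definition theta :: "(nat \<Rightarrow> real) \<Rightarrow> nat \<Rightarrow> real" where
  "theta w N = 1 + real N powr (-2/3) * w N"

definition rr :: "real \<Rightarrow> nat \<Rightarrow> nat \<Rightarrow> real" where
  "rr \<theta> N i = 1 + sqrt (1 - (real i - 1) / (real N * \<theta>\<^sup>2))"

definition mm :: "real \<Rightarrow> nat \<Rightarrow> nat \<Rightarrow> real" where
  "mm \<theta> N i = 1 - sqrt (1 - (real i - 1) / (real N * \<theta>\<^sup>2))"

definition gam :: "real \<Rightarrow> nat \<Rightarrow> nat \<Rightarrow> real" where
  "gam \<theta> N i = mm \<theta> N i / rr \<theta> N i"

definition cc :: "(nat \<Rightarrow> real) \<Rightarrow> nat \<Rightarrow> real" where
  "cc b i = ((b i)\<^sup>2 - real i) / sqrt (real i)"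

definition xi :: "real \<Rightarrow> nat \<Rightarrow> (nat \<Rightarrow> real) \<Rightarrow> (nat \<Rightarrow> real) \<Rightarrow> nat \<Rightarrow> real" where
  "xi \<theta> N a b i = a i / (sqrt (real N) * \<theta> * rr \<theta> N i)
     + sqrt (mm \<theta> N i / rr \<theta> N i) * cc b (i - 1) / (sqrt (real N) * \<theta> * rr \<theta> N (i - 1))"

(* L_2 = 0, L_i = xi_i + gamma_i L_{i-1} for i \<ge> 3 (values for i < 2 are irrelevant, set to 0) *)
primrec LL :: "real \<Rightarrow> nat \<Rightarrow> (nat \<Rightarrow> real) \<Rightarrow> (nat \<Rightarrow> real) \<Rightarrow> nat \<Rightarrow> real" where
  "LL \<theta> N a b 0 = 0"
| "LL \<theta> N a b (Suc i) = (if Suc i \<le> 2 then 0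
     else xi \<theta> N a b (Suc i) + gam \<theta> N (Suc i) * LL \<theta> N a b i)"

end

theory Submission
  imports Defs "HOL-Real_Asymp.Real_Asymp"
begin

lemma nn_integral_normal_density: "\<sigma> > 0 \<Longrightarrow> (\<integral>\<^sup>+y. ennreal (normal_density \<mu> \<sigma> y) \<partial>lborel) = 1"
  by (subst nn_integral_eq_integral) (auto simp: normal_density_nonneg)

lemma normal_density_exp_shift:
  assumes "\<sigma> > 0"
  shows "normal_density 0 \<sigma> y * exp (l * y) = exp (l\<^sup>2 * \<sigma>\<^sup>2 / 2) * normal_density (l * \<sigma>\<^sup>2) \<sigma> y"
proof -
  have "-(y - 0)\<^sup>2 / (2 * \<sigma>\<^sup>2) + l * y = l\<^sup>2 * \<sigma>\<^sup>2 / 2 + (-(y - l * \<sigma>\<^sup>2)\<^sup>2 / (2 * \<sigma>\<^sup>2))"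
    using assms by (simp add: field_simps power2_eq_square)
  then show ?thesis
    unfolding normal_density_def by (simp add: exp_add[symmetric] mult_ac)
qed

lemma normal_mgf:
  assumes D: "distributed M lborel X (\<lambda>x. ennreal (normal_density 0 \<sigma> x))" and s: "\<sigma> > 0"
  shows "(\<integral>\<^sup>+x. ennreal (exp (l * X x)) \<partial>M) = ennreal (exp (l\<^sup>2 * \<sigma>\<^sup>2 / 2))"
proof -
  have "(\<integral>\<^sup>+x. ennreal (exp (l * X x)) \<partial>M) = (\<integral>\<^sup>+y. ennreal (normal_density 0 \<sigma> y) * ennreal (exp (l*y)) \<partial>lborel)"
    by (rule distributed_nn_integral[OF D, symmetric]) simp
  also have "\<dots> = (\<integral>\<^sup>+y. ennreal (exp (l\<^sup>2 * \<sigma>\<^sup>2 / 2)) * ennreal (normal_density (l*\<sigma>\<^sup>2) \<sigma> y) \<partial>lborel)"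
    by (intro nn_integral_cong) (simp add: normal_density_exp_shift[OF s] flip: ennreal_mult)
  also have "\<dots> = ennreal (exp (l\<^sup>2 * \<sigma>\<^sup>2 / 2))"
    using s by (simp add: nn_integral_cmult nn_integral_normal_density)
  finally show ?thesis .
qed

lemma chi2_mgf:
  fixes s d :: real
  assumes D: "distributed M lborel Y (\<lambda>x. ennreal (chi2_density d x))" and d: "d > 0" and s: "s < 1/2"
  shows "(\<integral>\<^sup>+x. ennreal (exp (s * Y x)) \<partial>M) = ennreal ((1 - 2 * s) powr (- d / 2))"
proof -
  define k where "k = d/2"
  define \<beta> where "\<beta> = 1/2 - s"
  define C where "C = 1 / (2 powr k * Gamma k)"
  have k: "k > 0" using d by (simp add: k_def)
  have b: "\<beta> > 0" using s by (simp add: \<beta>_def)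
  have C: "C > 0" using k by (simp add: C_def Gamma_real_pos)
  define f where "f = (\<lambda>y::real. indicator {0..} y * y powr (k - 1) / exp y)"
  have fm[measurable]: "f \<in> borel_measurable borel" unfolding f_def by measurable
  have G: "ennreal (Gamma k) = (\<integral>\<^sup>+y. ennreal (f y) \<partial>lborel)"
    unfolding f_def by (rule Gamma_conv_nn_integral_real[OF k])
  have "(\<integral>\<^sup>+x. ennreal (exp (s * Y x)) \<partial>M) = (\<integral>\<^sup>+y. ennreal (chi2_density d y) * ennreal (exp (s*y)) \<partial>lborel)"
    by (rule distributed_nn_integral[OF D, symmetric]) simp
  also have "\<dots> = (\<integral>\<^sup>+y. ennreal (C * \<beta> powr (1 - k)) * ennreal (f (\<beta> * y)) \<partial>lborel)"
  proof (intro nn_integral_cong)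
    fix y :: real
    show "ennreal (chi2_density d y) * ennreal (exp (s*y)) = ennreal (C * \<beta> powr (1 - k)) * ennreal (f (\<beta> * y))"
    proof (cases "y > 0")
      case True
      have e1: "exp (-y/2) * exp (s*y) = 1 / exp (\<beta> * y)"
        by (simp add: \<beta>_def exp_add[symmetric] exp_minus[symmetric] field_simps)
      have e2: "(\<beta> * y) powr (k - 1) = \<beta> powr (k - 1) * y powr (k - 1)"
        using b True by (simp add: powr_mult)
      have e3: "\<beta> powr (k - 1) * \<beta> powr (1 - k) = 1"
        using b by (simp add: powr_add[symmetric])
      have "chi2_density d y * exp (s*y) = C * y powr (k - 1) * (exp (-y/2) * exp (s*y))"
        using True unfolding chi2_density_def C_def k_def by simp
      also have "\<dots> = C * ((\<beta> * y) powr (k - 1) / exp (\<beta> * y)) * \<beta> powr (1 - k)"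
        unfolding e1 e2 using e3 by (simp add: field_simps)
      finally have "chi2_density d y * exp (s*y) = C * ((\<beta> * y) powr (k - 1) / exp (\<beta> * y)) * \<beta> powr (1 - k)" .
      moreover have "chi2_density d y \<ge> 0"
        using True d by (simp add: chi2_density_def Gamma_real_pos)
      ultimately show ?thesis using True b C
        by (simp add: f_def ennreal_mult'[symmetric] ennreal_mult[symmetric] mult_ac)
    next
      case False
      then have "f (\<beta> * y) = 0" using b by (auto simp: f_def indicator_def zero_le_mult_iff)
      then show ?thesis using False by (simp add: chi2_density_def)
    qed
  qed
  also have "\<dots> = ennreal (C * \<beta> powr (1 - k)) * (\<integral>\<^sup>+y. ennreal (f (\<beta> * y)) \<partial>lborel)"
    by (rule nn_integral_cmult) simp
  also have "(\<integral>\<^sup>+y. ennreal (f (\<beta> * y)) \<partial>lborel) = ennreal (Gamma k / \<beta>)"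
  proof -
    have "(\<integral>\<^sup>+y. ennreal (f y) \<partial>lborel) = \<bar>\<beta>\<bar> * (\<integral>\<^sup>+y. ennreal (f (0 + \<beta> * y)) \<partial>lborel)"
      by (rule nn_integral_real_affine) (use b in auto)
    then have "ennreal (Gamma k) = ennreal \<beta> * (\<integral>\<^sup>+y. ennreal (f (\<beta> * y)) \<partial>lborel)"
      using b G by simp
    then have "ennreal (1/\<beta>) * ennreal (Gamma k) = (\<integral>\<^sup>+y. ennreal (f (\<beta> * y)) \<partial>lborel)"
      using b by (simp add: ennreal_mult'[symmetric] mult.assoc[symmetric] flip: ennreal_mult)
    then show ?thesis using b k by (simp add: ennreal_mult'[symmetric] Gamma_real_pos less_imp_le)
  qed
  also have "ennreal (C * \<beta> powr (1 - k)) * ennreal (Gamma k / \<beta>) = ennreal (C * \<beta> powr (1 - k) * (Gamma k / \<beta>))"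
    using b k C by (subst ennreal_mult[symmetric]) (auto simp: Gamma_real_pos less_imp_le)
  also have "C * \<beta> powr (1 - k) * (Gamma k / \<beta>) = (1 - 2 * s) powr (- d / 2)"
  proof -
    have g: "Gamma k > 0" using k by (simp add: Gamma_real_pos)
    have e1: "\<beta> powr (1 - k) / \<beta> = \<beta> powr (- k)"
      using b by (simp add: powr_diff powr_minus field_simps)
    have e2: "(1 - 2 * s) = 2 * \<beta>" by (simp add: \<beta>_def)
    have e3: "(2 * \<beta>) powr (- k) = 2 powr (-k) * \<beta> powr (-k)" using b by (simp add: powr_mult)
    have "C * \<beta> powr (1 - k) * (Gamma k / \<beta>) = (\<beta> powr (1 - k) / \<beta>) * 2 powr (-k)"
      using g unfolding C_def by (simp add: powr_minus field_simps)
    also have "\<dots> = (1 - 2 * s) powr (- k)" unfolding e1 e2 e3 by simp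
    finally have "C * \<beta> powr (1 - k) * (Gamma k / \<beta>) = (1 - 2 * s) powr (- k)" .
    then show ?thesis by (simp add: k_def)
  qed
  finally show ?thesis .
qed


lemma ln_one_minus_lower: fixes y :: real assumes "\<bar>y\<bar> \<le> 1/2" shows "- y - 2 * y\<^sup>2 \<le> ln (1 - y)"
proof (cases "y \<ge> 0")
  case True then show ?thesis using ln_one_minus_pos_lower_bound[of y] assms by auto
next
  case False
  then have "(-y) - (-y)\<^sup>2 \<le> ln (1 + (-y))" using ln_one_plus_pos_lower_bound[of "-y"] assms by auto
  then have h: "- y - y * y \<le> ln (1 - y)" by (simp add: power2_eq_square)
  have "0 \<le> y * y" by simp
  with h show ?thesis unfolding power2_eq_square by linarith
qed

lemma cc_mgf:
  fixes \<alpha> \<mu> :: real and j :: nat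
  assumes D: "distributed M lborel (\<lambda>x. (2 / \<alpha>) * (B x)\<^sup>2) (\<lambda>x. ennreal (chi2_density (2 * real j / \<alpha>) x))"
    and a: "\<alpha> > 0" and j: "j \<ge> 1" and mu: "\<bar>\<mu>\<bar> * \<alpha> \<le> 1/2"
  shows "(\<integral>\<^sup>+x. ennreal (exp (\<mu> * (((B x)\<^sup>2 - real j) / sqrt (real j)))) \<partial>M) \<le> ennreal (exp (2 * \<alpha> * \<mu>\<^sup>2))"
proof -
  define sj where "sj = sqrt (real j)"
  have sj: "sj \<ge> 1" using j by (simp add: sj_def)
  define s where "s = \<mu> * \<alpha> / (2 * sj)"
  define y where "y = \<mu> * \<alpha> / sj"
  have y: "\<bar>y\<bar> \<le> 1/2"
  proof -
    have "\<bar>y\<bar> = \<bar>\<mu>\<bar> * \<alpha> / sj" using a sj by (simp add: y_def abs_mult)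
    also have "\<dots> \<le> \<bar>\<mu>\<bar> * \<alpha>"
    proof -
      have "\<bar>\<mu>\<bar> * \<alpha> * 1 \<le> \<bar>\<mu>\<bar> * \<alpha> * sj" by (rule mult_left_mono) (use sj a in auto)
      then show ?thesis using sj by (simp add: divide_le_eq)
    qed
    finally show ?thesis using mu by simp
  qed
  have s: "s < 1/2"
  proof -
    have "s = y / 2" by (simp add: s_def y_def)
    then show ?thesis using y by (simp add: abs_le_iff)
  qed
  have d: "2 * real j / \<alpha> > 0" using a j by simp
  have eq: "\<And>x. \<mu> * (((B x)\<^sup>2 - real j) / sqrt (real j)) = s * ((2 / \<alpha>) * (B x)\<^sup>2) + (- \<mu> * sj)"
  proof -
    fix x
    have "sj * sj = real j" by (simp add: sj_def)
    then show "\<mu> * (((B x)\<^sup>2 - real j) / sqrt (real j)) = s * ((2 / \<alpha>) * (B x)\<^sup>2) + (- \<mu> * sj)"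
      using a sj unfolding s_def sj_def[symmetric] by (simp add: field_simps)
  qed
  have "(\<integral>\<^sup>+x. ennreal (exp (\<mu> * (((B x)\<^sup>2 - real j) / sqrt (real j)))) \<partial>M)
      = (\<integral>\<^sup>+x. ennreal (exp (s * ((2 / \<alpha>) * (B x)\<^sup>2))) * ennreal (exp (- \<mu> * sj)) \<partial>M)"
    apply (intro nn_integral_cong)
    apply (subst eq)
    apply (subst exp_add)
    apply (subst ennreal_mult)
    by auto
  also have "\<dots> = (\<integral>\<^sup>+x. ennreal (exp (s * ((2 / \<alpha>) * (B x)\<^sup>2))) \<partial>M) * ennreal (exp (- \<mu> * sj))"
  proof (rule nn_integral_multc)
    have "(\<lambda>x. ennreal (exp (s * ((2 / \<alpha>) * (B x)\<^sup>2)))) \<in> measurable M borel"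
      by (rule measurable_compose[OF D[THEN distributed_measurable], of "\<lambda>y. ennreal (exp (s*y))"]) simp
    then show "(\<lambda>x. ennreal (exp (s * ((2 / \<alpha>) * (B x)\<^sup>2)))) \<in> borel_measurable M" by simp
  qed
  also have "(\<integral>\<^sup>+x. ennreal (exp (s * ((2 / \<alpha>) * (B x)\<^sup>2))) \<partial>M) = ennreal ((1 - 2 * s) powr (- (2 * real j / \<alpha>) / 2))"
    by (rule chi2_mgf[OF D d s])
  also have "ennreal ((1 - 2 * s) powr (- (2 * real j / \<alpha>) / 2)) * ennreal (exp (- \<mu> * sj))
      = ennreal (exp (- \<mu> * sj) * (1 - 2 * s) powr (- (2 * real j / \<alpha>) / 2))"
    by (simp add: ennreal_mult mult.commute)
  also have "\<dots> \<le> ennreal (exp (2 * \<alpha> * \<mu>\<^sup>2))"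
  proof (rule ennreal_leI)
    have y2: "1 - 2 * s = 1 - y" by (simp add: s_def y_def)
    have pos: "1 - y > 0" using y by (simp add: abs_le_iff)
    have "(1 - 2 * s) powr (- (2 * real j / \<alpha>) / 2) = exp (- (real j / \<alpha>) * ln (1 - y))"
      unfolding y2 using pos by (simp add: powr_def)
    then have "exp (- \<mu> * sj) * (1 - 2 * s) powr (- (2 * real j / \<alpha>) / 2) = exp (- \<mu> * sj - (real j / \<alpha>) * ln (1 - y))"
      by (simp add: exp_add[symmetric])
    also have "\<dots> \<le> exp (2 * \<alpha> * \<mu>\<^sup>2)"
    proof -
      have L: "- y - 2 * y\<^sup>2 \<le> ln (1 - y)" by (rule ln_one_minus_lower[OF y])
      have "- (real j / \<alpha>) * ln (1 - y) \<le> (real j / \<alpha>) * (y + 2 * y\<^sup>2)"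
      proof -
        have "(real j / \<alpha>) * (- ln (1 - y)) \<le> (real j / \<alpha>) * (y + 2 * y\<^sup>2)"
          by (rule mult_left_mono) (use L a in auto)
        then show ?thesis by simp
      qed
      also have "(real j / \<alpha>) * (y + 2 * y\<^sup>2) = \<mu> * sj + 2 * \<alpha> * \<mu>\<^sup>2"
      proof -
        have "sj * sj = real j" by (simp add: sj_def)
        then show ?thesis using a sj j unfolding y_def by (simp add: field_simps power2_eq_square)
      qed
      finally show ?thesis by simp
    qed
    finally show "exp (- \<mu> * sj) * (1 - 2 * s) powr (- (2 * real j / \<alpha>) / 2) \<le> exp (2 * \<alpha> * \<mu>\<^sup>2)" .
  qed
  finally show ?thesis .
qed

lemma rr_mm_basic:
  assumes th: "\<theta> \<ge> 1" and k: "1 \<le> k" "k \<le> N"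
  shows "1 \<le> rr \<theta> N k" "rr \<theta> N k \<le> 2" "0 \<le> mm \<theta> N k" "mm \<theta> N k \<le> 1"
    "mm \<theta> N k \<le> rr \<theta> N k"
proof -
  define u where "u = (real k - 1) / (real N * \<theta>\<^sup>2)"
  have N: "real N \<ge> 1" using k by simp
  have t2: "\<theta>\<^sup>2 \<ge> 1" using th by (simp add: one_le_power)
  have "real N \<le> real N * \<theta>\<^sup>2" using N t2 by (simp add: mult_le_cancel_left1)
  then have "real k - 1 < real N * \<theta>\<^sup>2" using k by linarith
  moreover have "real k - 1 \<ge> 0" using k by simp
  moreover have "real N * \<theta>\<^sup>2 > 0" using N t2 by (intro mult_pos_pos) auto
  ultimately have u: "0 \<le> u" "u < 1" unfolding u_def by (auto simp: divide_less_eq)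
  have s: "0 \<le> sqrt (1 - u)" "sqrt (1 - u) \<le> 1" using u by auto
  show "1 \<le> rr \<theta> N k" "rr \<theta> N k \<le> 2" "0 \<le> mm \<theta> N k" "mm \<theta> N k \<le> 1" "mm \<theta> N k \<le> rr \<theta> N k"
    using s unfolding rr_def mm_def u_def[symmetric] by auto
qed

lemma coef_p_bound:
  assumes th: "\<theta> \<ge> 1" and k: "1 \<le> k" "k \<le> N"
  shows "(1 / (sqrt (real N) * \<theta> * rr \<theta> N k))\<^sup>2 \<le> 1 / real N"
proof -
  have r: "rr \<theta> N k \<ge> 1" using rr_mm_basic[OF th k] by simp
  have "(sqrt (real N) * \<theta> * rr \<theta> N k)\<^sup>2 = real N * \<theta>\<^sup>2 * (rr \<theta> N k)\<^sup>2"
    by (simp add: power_mult_distrib)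
  moreover have "\<theta>\<^sup>2 * (rr \<theta> N k)\<^sup>2 \<ge> 1"
  proof -
    have "1 * 1 \<le> \<theta>\<^sup>2 * (rr \<theta> N k)\<^sup>2"
      by (rule mult_mono) (use th r in \<open>auto simp: one_le_power\<close>)
    then show ?thesis by simp
  qed
  ultimately have "(sqrt (real N) * \<theta> * rr \<theta> N k)\<^sup>2 \<ge> real N" using k
    by (simp add: mult.assoc mult_le_cancel_left1)
  then show ?thesis using k by (simp add: power_divide frac_le)
qed

lemma coef_q_bound:
  assumes th: "\<theta> \<ge> 1" and k: "2 \<le> k" "k \<le> N"
  shows "(sqrt (mm \<theta> N k / rr \<theta> N k) / (sqrt (real N) * \<theta> * rr \<theta> N (k - 1)))\<^sup>2 \<le> 1 / real N"
proof -
  have b: "1 \<le> rr \<theta> N k" "0 \<le> mm \<theta> N k" "mm \<theta> N k \<le> rr \<theta> N k" using rr_mm_basic[OF th, of k N] k by auto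
  have g: "0 \<le> mm \<theta> N k / rr \<theta> N k" "mm \<theta> N k / rr \<theta> N k \<le> 1" using b by auto
  have "(sqrt (mm \<theta> N k / rr \<theta> N k) / (sqrt (real N) * \<theta> * rr \<theta> N (k - 1)))\<^sup>2
      = (mm \<theta> N k / rr \<theta> N k) * (1 / (sqrt (real N) * \<theta> * rr \<theta> N (k - 1)))\<^sup>2"
    using g by (simp add: power_divide)
  also have "\<dots> \<le> 1 * (1 / real N)"
    by (rule mult_mono) (use g coef_p_bound[OF th, of "k - 1" N] k in auto)
  finally show ?thesis by simp
qed


definition Zw :: "real \<Rightarrow> nat \<Rightarrow> (nat \<Rightarrow> real) \<Rightarrow> (nat \<Rightarrow> real) \<Rightarrow> (nat \<Rightarrow> real) \<Rightarrow> real" where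
  "Zw \<theta> N wt av bv = (\<Sum>k\<in>{3..N}. wt k * xi \<theta> N av bv k)"

lemma sum_Inl_Inr:
  fixes N :: nat
  assumes "N \<ge> 3"
  shows "(\<Sum>j\<in>Inl ` {3..N} \<union> Inr ` {2..N-1}. F j) = (\<Sum>k\<in>{3..N}. F (Inl k) + F (Inr (k - 1)))"
proof -
  have "(\<Sum>j\<in>Inl ` {3..N} \<union> Inr ` {2..N-1}. F j) = (\<Sum>j\<in>Inl ` {3..N}. F j) + (\<Sum>j\<in>Inr ` {2..N-1}. F j)"
    by (rule sum.union_disjoint) auto
  also have "(\<Sum>j\<in>Inl ` {3..N}. F j) = (\<Sum>k\<in>{3..N}. F (Inl k))"
    by (simp add: sum.reindex)
  also have "(\<Sum>j\<in>Inr ` {2..N-1}. F j) = (\<Sum>k\<in>{2..N-1}. F (Inr k))"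
    by (simp add: sum.reindex)
  also have "\<dots> = (\<Sum>k\<in>{3..N}. F (Inr (k - 1)))"
  proof -
    have "{3..N} = {2+1..(N-1)+1}" using assms by simp
    then show ?thesis by (simp only: sum.shift_bounds_cl_nat_ivl) simp
  qed
  finally show ?thesis by (simp add: sum.distrib)
qed

lemma xi_split:
  assumes "k \<ge> 2"
  shows "xi \<theta> N av bv k = (1/(sqrt (real N) * \<theta> * rr \<theta> N k)) * av k
     + (sqrt (mm \<theta> N k / rr \<theta> N k) / (sqrt (real N) * \<theta> * rr \<theta> N (k-1))) * (((bv (k-1))\<^sup>2 - real (k-1)) / sqrt (real (k-1)))"
  by (simp add: xi_def cc_def)

lemma tail_upper:
  fixes M :: "'s measure" and a b :: "nat \<Rightarrow> 's \<Rightarrow> real"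
  assumes P: "prob_space M" and \<alpha>: "\<alpha> > 0"
    and indep: "prob_space.indep_vars M (\<lambda>_. borel) (\<lambda>j. case j of Inl i \<Rightarrow> a i | Inr i \<Rightarrow> b i) (Inl ` {1..N} \<union> Inr ` {1..N-1})"
    and a_distr: "\<And>i. 1 \<le> i \<Longrightarrow> i \<le> N \<Longrightarrow> distributed M lborel (a i) (\<lambda>x. ennreal (normal_density 0 (sqrt \<alpha>) x))"
    and b_distr: "\<And>i. 1 \<le> i \<Longrightarrow> i \<le> N - 1 \<Longrightarrow> distributed M lborel (\<lambda>x. (2 / \<alpha>) * (b i x)\<^sup>2) (\<lambda>x. ennreal (chi2_density (2 * real i / \<alpha>) x))"
    and th: "\<theta> \<ge> 1" and N: "N \<ge> 3"
    and wt: "\<And>k. k \<in> {3..N} \<Longrightarrow> \<bar>wt k\<bar> \<le> 1" and S: "(\<Sum>k\<in>{3..N}. (wt k)\<^sup>2) \<le> S"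
    and l: "0 < l" "l \<le> sqrt (real N) / (2 * \<alpha>)"
  shows "measure M {x \<in> space M. Zw \<theta> N wt (\<lambda>i. a i x) (\<lambda>i. b i x) \<ge> t} \<le> exp (- l * t + l\<^sup>2 * (4 * \<alpha> / real N) * S)"
proof -
  interpret prob_space M by (rule P)
  define p where "p k = 1/(sqrt (real N) * \<theta> * rr \<theta> N k)" for k
  define q where "q k = sqrt (mm \<theta> N k / rr \<theta> N k) / (sqrt (real N) * \<theta> * rr \<theta> N (k-1))" for k
  define V where "V j = (case j of Inl i \<Rightarrow> a i | Inr i \<Rightarrow> b i)" for j
  define I where "I = Inl ` {3..N} \<union> Inr ` {2..N-1}"
  define g where "g j y = (case j of Inl k \<Rightarrow> wt k * p k * y | Inr k \<Rightarrow> wt (k+1) * q (k+1) * ((y\<^sup>2 - real k)/sqrt (real k)))" for j y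
  define X where "X j x = g j (V j x)" for j x
  define c where "c j = (case j of Inl k \<Rightarrow> wt k * p k | Inr k \<Rightarrow> wt (k+1) * q (k+1))" for j
  define Z where "Z x = Zw \<theta> N wt (\<lambda>i. a i x) (\<lambda>i. b i x)" for x
  have finI: "finite I" unfolding I_def by simp
  have II: "I \<subseteq> Inl ` {1..N} \<union> Inr ` {1..N-1}" unfolding I_def by auto
  have indV0: "indep_vars (\<lambda>_. borel) V (Inl ` {1..N} \<union> Inr ` {1..N-1})"
    using indep unfolding V_def by simp
  have indV: "indep_vars (\<lambda>_. borel) V I" by (rule indep_vars_subset[OF indV0 II])
  have gm: "(\<lambda>y. g j y) \<in> borel_measurable borel" for j
    by (cases j) (simp_all add: g_def)
  have Vm: "j \<in> I \<Longrightarrow> V j \<in> borel_measurable M" for j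
    using indV unfolding indep_vars_def by auto
  have Xm: "j \<in> I \<Longrightarrow> X j \<in> borel_measurable M" for j
    unfolding X_def using measurable_compose[OF Vm gm] by simp
  have indX: "indep_vars (\<lambda>_. borel) (\<lambda>j x. ennreal (exp (l * X j x))) I"
    unfolding X_def by (rule indep_vars_compose2[OF indV]) (use gm in simp)
  have sumX: "(\<Sum>j\<in>I. X j x) = Z x" for x
  proof -
    have "(\<Sum>j\<in>I. X j x) = (\<Sum>k\<in>{3..N}. X (Inl k) x + X (Inr (k - 1)) x)"
      unfolding I_def by (rule sum_Inl_Inr[OF N])
    also have "\<dots> = Z x" unfolding Z_def Zw_def
    proof (intro sum.cong refl)
      fix k assume k: "k \<in> {3..N}"
      then have k1: "k - 1 + 1 = k" by simp
      show "X (Inl k) x + X (Inr (k - 1)) x = wt k * xi \<theta> N (\<lambda>i. a i x) (\<lambda>i. b i x) k"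
        using k by (simp add: X_def g_def V_def k1 xi_split p_def q_def algebra_simps)
    qed
    finally show ?thesis .
  qed
  have pq: "k \<in> {3..N} \<Longrightarrow> (p k)\<^sup>2 \<le> 1 / real N \<and> (q k)\<^sup>2 \<le> 1 / real N" for k
    unfolding p_def q_def using coef_p_bound[OF th, of k N] coef_q_bound[OF th, of k N] by auto
  have sumc: "(\<Sum>j\<in>I. (c j)\<^sup>2) \<le> 2 * S / real N"
  proof -
    have "(\<Sum>j\<in>I. (c j)\<^sup>2) = (\<Sum>k\<in>{3..N}. (c (Inl k))\<^sup>2 + (c (Inr (k - 1)))\<^sup>2)"
      unfolding I_def by (rule sum_Inl_Inr[OF N])
    also have "\<dots> \<le> (\<Sum>k\<in>{3..N}. (wt k)\<^sup>2 * (2 / real N))"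
    proof (intro sum_mono)
      fix k assume k: "k \<in> {3..N}"
      then have k1: "k - 1 + 1 = k" "Suc (k - Suc 0) = k" by auto
      have "(c (Inl k))\<^sup>2 + (c (Inr (k - 1)))\<^sup>2 = (wt k)\<^sup>2 * ((p k)\<^sup>2 + (q k)\<^sup>2)"
        by (simp add: c_def k1 power_mult_distrib algebra_simps)
      also have "\<dots> \<le> (wt k)\<^sup>2 * (2 / real N)"
        by (rule mult_left_mono) (use pq[OF k] in auto)
      finally show "(c (Inl k))\<^sup>2 + (c (Inr (k - 1)))\<^sup>2 \<le> (wt k)\<^sup>2 * (2 / real N)" .
    qed
    also have "\<dots> = (\<Sum>k\<in>{3..N}. (wt k)\<^sup>2) * (2 / real N)" by (rule sum_distrib_right[symmetric])
    also have "\<dots> \<le> S * (2 / real N)" by (rule mult_right_mono) (use S in auto)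
    finally show ?thesis by (simp add: mult.commute)
  qed
  have cabs: "j \<in> I \<Longrightarrow> \<bar>c j\<bar> \<le> 1 / sqrt (real N)" for j
  proof -
    assume j: "j \<in> I"
    have sq: "\<bar>x\<bar> \<le> 1 / sqrt (real N)" if "x\<^sup>2 \<le> 1 / real N" for x :: real
    proof -
      have "sqrt (x\<^sup>2) \<le> sqrt (1 / real N)" using that by (rule real_sqrt_le_mono)
      then show ?thesis by (simp add: real_sqrt_divide)
    qed
    have w2: "(wt k)\<^sup>2 \<le> 1" if "k \<in> {3..N}" for k
      using wt[OF that] by (simp add: abs_square_le_1)
    show ?thesis
    proof (cases j)
      case (Inl k)
      with j have k: "k \<in> {3..N}" unfolding I_def by auto
      have "(c j)\<^sup>2 = (wt k)\<^sup>2 * (p k)\<^sup>2" using Inl by (simp add: c_def power_mult_distrib)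
      also have "\<dots> \<le> 1 * (1 / real N)" by (rule mult_mono) (use w2[OF k] pq[OF k] in auto)
      finally show ?thesis using sq by simp
    next
      case (Inr k)
      with j have k: "k + 1 \<in> {3..N}" unfolding I_def by auto
      have "(c j)\<^sup>2 = (wt (k+1))\<^sup>2 * (q (k+1))\<^sup>2" using Inr by (simp add: c_def power_mult_distrib)
      also have "\<dots> \<le> 1 * (1 / real N)" by (rule mult_mono) (use w2[OF k] pq[OF k] in auto)
      finally show ?thesis using sq by simp
    qed
  qed
  have mgf: "(\<integral>\<^sup>+x. ennreal (exp (l * X j x)) \<partial>M) \<le> ennreal (exp (2 * \<alpha> * l\<^sup>2 * (c j)\<^sup>2))" if j: "j \<in> I" for j
  proof (cases j)
    case (Inl k)
    with j have k: "1 \<le> k" "k \<le> N" unfolding I_def by auto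
    have "(\<integral>\<^sup>+x. ennreal (exp (l * X j x)) \<partial>M) = (\<integral>\<^sup>+x. ennreal (exp ((l * c j) * a k x)) \<partial>M)"
      using Inl by (simp add: X_def g_def V_def c_def mult_ac)
    also have "\<dots> = ennreal (exp ((l * c j)\<^sup>2 * (sqrt \<alpha>)\<^sup>2 / 2))"
      by (rule normal_mgf[OF a_distr[OF k]]) (use \<alpha> in simp)
    also have "\<dots> \<le> ennreal (exp (2 * \<alpha> * l\<^sup>2 * (c j)\<^sup>2))"
      using \<alpha> by (intro ennreal_leI) (simp add: power_mult_distrib mult_nonneg_nonneg)
    finally show ?thesis .
  next
    case (Inr k)
    with j have k: "1 \<le> k" "k \<le> N - 1" unfolding I_def by auto
    have mu: "\<bar>l * c j\<bar> * \<alpha> \<le> 1/2"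
    proof -
      have "\<bar>l * c j\<bar> * \<alpha> = l * \<bar>c j\<bar> * \<alpha>" using l by (simp add: abs_mult)
      also have "\<dots> \<le> (sqrt (real N) / (2 * \<alpha>)) * (1 / sqrt (real N)) * \<alpha>"
        by (intro mult_right_mono mult_mono l cabs[OF j]) (use \<alpha> l in auto)
      also have "\<dots> = 1/2" using \<alpha> N by simp
      finally show ?thesis .
    qed
    have "(\<integral>\<^sup>+x. ennreal (exp (l * X j x)) \<partial>M) = (\<integral>\<^sup>+x. ennreal (exp ((l * c j) * (((b k x)\<^sup>2 - real k) / sqrt (real k)))) \<partial>M)"
      using Inr by (simp add: X_def g_def V_def c_def mult_ac)
    also have "\<dots> \<le> ennreal (exp (2 * \<alpha> * (l * c j)\<^sup>2))"
      by (rule cc_mgf[OF b_distr[OF k] \<alpha> k(1) mu])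
    finally show ?thesis by (simp add: power_mult_distrib mult_ac)
  qed
  have Zm: "Z \<in> borel_measurable M"
  proof -
    have "(\<lambda>x. \<Sum>j\<in>I. X j x) \<in> borel_measurable M" using Xm by (intro borel_measurable_sum) auto
    then show ?thesis using sumX by simp
  qed
  have "emeasure M {x\<in>space M. Z x \<ge> t} \<le> ennreal (exp (-l * t)) * (\<integral>\<^sup>+x. ennreal (exp (l * Z x)) * indicator (space M) x \<partial>M)"
    by (rule Chernoff_ineq_nn_integral_ge[OF l(1)]) (use Zm in auto)
  also have "(\<integral>\<^sup>+x. ennreal (exp (l * Z x)) * indicator (space M) x \<partial>M) = (\<integral>\<^sup>+x. (\<Prod>j\<in>I. ennreal (exp (l * X j x))) \<partial>M)"
    by (intro nn_integral_cong) (simp add: sumX[symmetric] sum_distrib_left exp_sum finI prod_ennreal)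
  also have "\<dots> = (\<Prod>j\<in>I. \<integral>\<^sup>+x. ennreal (exp (l * X j x)) \<partial>M)"
    by (rule indep_vars_nn_integral[OF finI indX]) simp
  also have "ennreal (exp (-l * t)) * \<dots> \<le> ennreal (exp (-l * t)) * (\<Prod>j\<in>I. ennreal (exp (2 * \<alpha> * l\<^sup>2 * (c j)\<^sup>2)))"
    by (intro mult_left_mono prod_mono_ennreal mgf) auto
  also have "\<dots> = ennreal (exp (-l * t) * (\<Prod>j\<in>I. exp (2 * \<alpha> * l\<^sup>2 * (c j)\<^sup>2)))"
    by (simp add: prod_ennreal prod_nonneg flip: ennreal_mult)
  also have "exp (-l * t) * (\<Prod>j\<in>I. exp (2 * \<alpha> * l\<^sup>2 * (c j)\<^sup>2)) = exp (-l * t + 2 * \<alpha> * l\<^sup>2 * (\<Sum>j\<in>I. (c j)\<^sup>2))"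
    by (simp add: exp_sum[OF finI, symmetric] sum_distrib_left exp_add[symmetric])
  also have "\<dots> \<le> ennreal (exp (- l * t + l\<^sup>2 * (4 * \<alpha> / real N) * S))"
  proof (intro ennreal_leI, subst exp_le_cancel_iff)
    have "2 * \<alpha> * l\<^sup>2 * (\<Sum>j\<in>I. (c j)\<^sup>2) \<le> 2 * \<alpha> * l\<^sup>2 * (2 * S / real N)"
      by (rule mult_left_mono[OF sumc]) (use \<alpha> in simp)
    then show "-l * t + 2 * \<alpha> * l\<^sup>2 * (\<Sum>j\<in>I. (c j)\<^sup>2) \<le> - l * t + l\<^sup>2 * (4 * \<alpha> / real N) * S"
      by (simp add: field_simps)
  qed
  finally have "emeasure M {x\<in>space M. Z x \<ge> t} \<le> ennreal (exp (- l * t + l\<^sup>2 * (4 * \<alpha> / real N) * S))" .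
  then show ?thesis unfolding Z_def by (simp add: emeasure_eq_measure)
qed

lemma Zw_meas:
  fixes M :: "'s measure" and a b :: "nat \<Rightarrow> 's \<Rightarrow> real"
  assumes P: "prob_space M"
    and indep: "prob_space.indep_vars M (\<lambda>_. borel) (\<lambda>j. case j of Inl i \<Rightarrow> a i | Inr i \<Rightarrow> b i) (Inl ` {1..N} \<union> Inr ` {1..N-1})"
  shows "(\<lambda>x. Zw \<theta> N wt (\<lambda>i. a i x) (\<lambda>i. b i x)) \<in> borel_measurable M"
proof -
  interpret prob_space M by (rule P)
  have rv: "j \<in> Inl ` {1..N} \<union> Inr ` {1..N-1} \<Longrightarrow> (case j of Inl i \<Rightarrow> a i | Inr i \<Rightarrow> b i) \<in> borel_measurable M" for j
    using indep unfolding indep_vars_def by auto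
  have am: "k \<in> {3..N} \<Longrightarrow> a k \<in> borel_measurable M" for k using rv[of "Inl k"] by auto
  have bm: "k \<in> {3..N} \<Longrightarrow> b (k - 1) \<in> borel_measurable M" for k
  proof -
    assume "k \<in> {3..N}"
    then have "k - 1 \<in> {1..N-1}" by auto
    then have "Inr (k - 1) \<in> Inl ` {1..N} \<union> Inr ` {1..N-1}" by blast
    then show ?thesis using rv[of "Inr (k - 1)"] by auto
  qed
  show ?thesis unfolding Zw_def
  proof (rule borel_measurable_sum)
    fix k assume k: "k \<in> {3..N}"
    note [measurable] = am[OF k] bm[OF k]
    show "(\<lambda>x. wt k * xi \<theta> N (\<lambda>i. a i x) (\<lambda>i. b i x) k) \<in> borel_measurable M"
      unfolding xi_def cc_def by measurable
  qed
qed

lemma Zw_neg: "Zw \<theta> N (\<lambda>k. - wt k) av bv = - Zw \<theta> N wt av bv"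
  by (simp add: Zw_def sum_negf)

lemma tail_abs:
  fixes M :: "'s measure" and a b :: "nat \<Rightarrow> 's \<Rightarrow> real"
  assumes P: "prob_space M" and \<alpha>: "\<alpha> > 0"
    and indep: "prob_space.indep_vars M (\<lambda>_. borel) (\<lambda>j. case j of Inl i \<Rightarrow> a i | Inr i \<Rightarrow> b i) (Inl ` {1..N} \<union> Inr ` {1..N-1})"
    and a_distr: "\<And>i. 1 \<le> i \<Longrightarrow> i \<le> N \<Longrightarrow> distributed M lborel (a i) (\<lambda>x. ennreal (normal_density 0 (sqrt \<alpha>) x))"
    and b_distr: "\<And>i. 1 \<le> i \<Longrightarrow> i \<le> N - 1 \<Longrightarrow> distributed M lborel (\<lambda>x. (2 / \<alpha>) * (b i x)\<^sup>2) (\<lambda>x. ennreal (chi2_density (2 * real i / \<alpha>) x))"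
    and th: "\<theta> \<ge> 1" and N: "N \<ge> 3"
    and wt: "\<And>k. k \<in> {3..N} \<Longrightarrow> \<bar>wt k\<bar> \<le> 1" and S: "(\<Sum>k\<in>{3..N}. (wt k)\<^sup>2) \<le> S"
    and Sp: "S > 0" and t: "t > 0"
  shows "measure M {x \<in> space M. \<bar>Zw \<theta> N wt (\<lambda>i. a i x) (\<lambda>i. b i x)\<bar> \<ge> t}
     \<le> 2 * exp (- (t\<^sup>2 * real N / (16 * \<alpha> * S))) + 2 * exp (- (t * sqrt (real N) / (4 * \<alpha>)))"
proof -
  interpret prob_space M by (rule P)
  define l where "l = min (t * real N / (8 * \<alpha> * S)) (sqrt (real N) / (2 * \<alpha>))"
  have Npos: "real N > 0" using N by simp
  have lpos: "l > 0" unfolding l_def using t Sp \<alpha> Npos by simp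
  have lle: "l \<le> sqrt (real N) / (2 * \<alpha>)" unfolding l_def by simp
  have E: "exp (- l * t + l\<^sup>2 * (4 * \<alpha> / real N) * S)
      \<le> exp (- (t\<^sup>2 * real N / (16 * \<alpha> * S))) + exp (- (t * sqrt (real N) / (4 * \<alpha>)))"
  proof -
    have "l * (4 * \<alpha> / real N) * S \<le> (t * real N / (8 * \<alpha> * S)) * (4 * \<alpha> / real N) * S"
      by (intro mult_right_mono) (use Sp \<alpha> Npos in \<open>auto simp: l_def\<close>)
    also have "\<dots> = t / 2" using Sp \<alpha> Npos by (simp add: field_simps)
    finally have h: "l * (4 * \<alpha> / real N) * S \<le> t / 2" .
    have "- l * t + l\<^sup>2 * (4 * \<alpha> / real N) * S = - l * t + l * (l * (4 * \<alpha> / real N) * S)"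
      by (simp add: power2_eq_square mult_ac)
    also have "\<dots> \<le> - l * t + l * (t / 2)" using h lpos by (intro add_left_mono mult_left_mono) auto
    also have "\<dots> = - (t / 2) * l" by simp
    also have "\<dots> = max (- (t\<^sup>2 * real N / (16 * \<alpha> * S))) (- (t * sqrt (real N) / (4 * \<alpha>)))"
    proof -
      have "- (t / 2) * l = - ((t / 2) * l)" by simp
      also have "(t / 2) * l = min ((t / 2) * (t * real N / (8 * \<alpha> * S))) ((t / 2) * (sqrt (real N) / (2 * \<alpha>)))"
        unfolding l_def using t by (simp add: min_mult_distrib_left)
      finally have "- (t / 2) * l = max (- ((t / 2) * (t * real N / (8 * \<alpha> * S)))) (- ((t / 2) * (sqrt (real N) / (2 * \<alpha>))))"
        by (simp add: minus_min_eq_max)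
      then show ?thesis by (simp add: power2_eq_square field_simps)
    qed
    finally have "exp (- l * t + l\<^sup>2 * (4 * \<alpha> / real N) * S) \<le> exp (max (- (t\<^sup>2 * real N / (16 * \<alpha> * S))) (- (t * sqrt (real N) / (4 * \<alpha>))))"
      by simp
    also have "\<dots> \<le> exp (- (t\<^sup>2 * real N / (16 * \<alpha> * S))) + exp (- (t * sqrt (real N) / (4 * \<alpha>)))"
      by (simp add: max_def add_increasing add_increasing2)
    finally show ?thesis .
  qed
  define Z where "Z x = Zw \<theta> N wt (\<lambda>i. a i x) (\<lambda>i. b i x)" for x
  have Zm: "Z \<in> borel_measurable M" unfolding Z_def by (rule Zw_meas[OF P indep])
  have U: "measure M {x \<in> space M. Z x \<ge> t} \<le> exp (- l * t + l\<^sup>2 * (4 * \<alpha> / real N) * S)"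
    unfolding Z_def by (rule tail_upper[OF P \<alpha> indep a_distr b_distr th N wt S lpos lle])
  have L: "measure M {x \<in> space M. - Z x \<ge> t} \<le> exp (- l * t + l\<^sup>2 * (4 * \<alpha> / real N) * S)"
  proof -
    have "measure M {x \<in> space M. Zw \<theta> N (\<lambda>k. - wt k) (\<lambda>i. a i x) (\<lambda>i. b i x) \<ge> t} \<le> exp (- l * t + l\<^sup>2 * (4 * \<alpha> / real N) * S)"
      by (rule tail_upper[OF P \<alpha> indep a_distr b_distr th N _ _ lpos lle]) (use wt S in auto)
    then show ?thesis unfolding Z_def Zw_neg .
  qed
  have "measure M {x \<in> space M. \<bar>Z x\<bar> \<ge> t} \<le> measure M ({x \<in> space M. Z x \<ge> t} \<union> {x \<in> space M. - Z x \<ge> t})"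
    by (rule finite_measure_mono) (use Zm in auto)
  also have "\<dots> \<le> measure M {x \<in> space M. Z x \<ge> t} + measure M {x \<in> space M. - Z x \<ge> t}"
    by (rule measure_Un_le) (use Zm in auto)
  also have "\<dots> \<le> 2 * exp (- l * t + l\<^sup>2 * (4 * \<alpha> / real N) * S)" using U L by simp
  also have "\<dots> \<le> 2 * (exp (- (t\<^sup>2 * real N / (16 * \<alpha> * S))) + exp (- (t * sqrt (real N) / (4 * \<alpha>))))"
    using E by simp
  finally show ?thesis unfolding Z_def by simp
qed

definition dl :: "real \<Rightarrow> nat \<Rightarrow> nat \<Rightarrow> real" where
  "dl \<theta> N l = sqrt (1 - (real l - 1) / (real N * \<theta>\<^sup>2))"

definition GG :: "real \<Rightarrow> nat \<Rightarrow> nat \<Rightarrow> nat \<Rightarrow> real" where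
  "GG \<theta> N k i = (\<Prod>l\<in>{k<..i}. gam \<theta> N l)"

definition wL :: "real \<Rightarrow> nat \<Rightarrow> nat \<Rightarrow> nat \<Rightarrow> real" where
  "wL \<theta> N i k = (if k \<le> i then GG \<theta> N k i else 0)"

lemma GG_same[simp]: "GG \<theta> N i i = 1" by (simp add: GG_def)

lemma GG_Suc: "k \<le> i \<Longrightarrow> GG \<theta> N k (Suc i) = gam \<theta> N (Suc i) * GG \<theta> N k i"
proof -
  assume "k \<le> i"
  then have "{k<..Suc i} = insert (Suc i) {k<..i}" by auto
  then show ?thesis unfolding GG_def by simp
qed

lemma GG_trans: "k \<le> i \<Longrightarrow> i \<le> s \<Longrightarrow> GG \<theta> N k s = GG \<theta> N k i * GG \<theta> N i s"
proof -
  assume "k \<le> i" "i \<le> s"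
  then have "{k<..s} = {k<..i} \<union> {i<..s}" "{k<..i} \<inter> {i<..s} = {}" by auto
  then show ?thesis unfolding GG_def by (simp add: prod.union_disjoint)
qed

lemma LL_rep: "LL \<theta> N av bv i = (\<Sum>k\<in>{3..i}. GG \<theta> N k i * xi \<theta> N av bv k)"
proof (induction i)
  case 0 then show ?case by simp
next
  case (Suc i)
  show ?case
  proof (cases "Suc i \<le> 2")
    case True
    then have "{3..Suc i} = {}" by auto
    then show ?thesis using True by simp
  next
    case False
    then have e: "{3..Suc i} = insert (Suc i) {3..i}" by auto
    have "(\<Sum>k\<in>{3..Suc i}. GG \<theta> N k (Suc i) * xi \<theta> N av bv k)
        = xi \<theta> N av bv (Suc i) + (\<Sum>k\<in>{3..i}. GG \<theta> N k (Suc i) * xi \<theta> N av bv k)"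
      unfolding e by simp
    also have "(\<Sum>k\<in>{3..i}. GG \<theta> N k (Suc i) * xi \<theta> N av bv k) = gam \<theta> N (Suc i) * LL \<theta> N av bv i"
      unfolding Suc.IH sum_distrib_left by (intro sum.cong) (auto simp: GG_Suc)
    finally show ?thesis using False by simp
  qed
qed

lemma LL_Zw: "i \<le> N \<Longrightarrow> LL \<theta> N av bv i = Zw \<theta> N (wL \<theta> N i) av bv"
proof -
  assume "i \<le> N"
  then have e: "{k\<in>{3..N}. k \<le> i} = {3..i}" by auto
  have "Zw \<theta> N (wL \<theta> N i) av bv = (\<Sum>k\<in>{3..N}. if k \<le> i then GG \<theta> N k i * xi \<theta> N av bv k else 0)"
    unfolding Zw_def wL_def by (intro sum.cong) auto
  also have "\<dots> = (\<Sum>k\<in>{k\<in>{3..N}. k \<le> i}. GG \<theta> N k i * xi \<theta> N av bv k)"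
    by (rule sum.inter_filter[symmetric]) simp
  finally show ?thesis unfolding LL_rep e by simp
qed

lemma dl_basic:
  assumes th: "\<theta> \<ge> 1" and k: "1 \<le> k" "k \<le> N"
  shows "0 < dl \<theta> N k" "dl \<theta> N k \<le> 1" "rr \<theta> N k = 1 + dl \<theta> N k" "mm \<theta> N k = 1 - dl \<theta> N k"
proof -
  define u where "u = (real k - 1) / (real N * \<theta>\<^sup>2)"
  have N: "real N \<ge> 1" using k by simp
  have t2: "\<theta>\<^sup>2 \<ge> 1" using th by (simp add: one_le_power)
  have "real N \<le> real N * \<theta>\<^sup>2" using N t2 by (simp add: mult_le_cancel_left1)
  then have "real k - 1 < real N * \<theta>\<^sup>2" using k by linarith
  moreover have "real k - 1 \<ge> 0" using k by simp
  moreover have "real N * \<theta>\<^sup>2 > 0" using N t2 by (intro mult_pos_pos) auto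
  ultimately have u: "0 \<le> u" "u < 1" unfolding u_def by (auto simp: divide_less_eq)
  show "0 < dl \<theta> N k" "dl \<theta> N k \<le> 1" using u unfolding dl_def u_def[symmetric] by auto
  show "rr \<theta> N k = 1 + dl \<theta> N k" "mm \<theta> N k = 1 - dl \<theta> N k" by (simp_all add: rr_def mm_def dl_def)
qed

lemma dl_mono:
  assumes th: "\<theta> \<ge> 1" and "l \<le> l'"
  shows "dl \<theta> N l' \<le> dl \<theta> N l"
proof -
  have "real N * \<theta>\<^sup>2 \<ge> 0" by simp
  then have "(real l' - 1) / (real N * \<theta>\<^sup>2) \<ge> (real l - 1) / (real N * \<theta>\<^sup>2)"
    using assms by (intro divide_right_mono) auto
  then show ?thesis unfolding dl_def by simp
qed

lemma gam_basic:
  assumes th: "\<theta> \<ge> 1" and k: "1 \<le> k" "k \<le> N"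
  shows "0 \<le> gam \<theta> N k" "gam \<theta> N k \<le> 1 - dl \<theta> N k" "1 - gam \<theta> N k \<le> 2 * dl \<theta> N k" "gam \<theta> N k \<le> 1"
proof -
  note d = dl_basic[OF th k]
  define x where "x = dl \<theta> N k"
  have x: "0 < x" "x \<le> 1" using d unfolding x_def by auto
  have g: "gam \<theta> N k = (1 - x) / (1 + x)" unfolding gam_def d(3,4) x_def ..
  show "0 \<le> gam \<theta> N k" using x g by simp
  have "(1 - x) * 1 \<le> (1 - x) * (1 + x)" by (rule mult_left_mono) (use x in auto)
  then have "(1 - x) / (1 + x) \<le> 1 - x" using x by (simp add: divide_le_eq mult.commute)
  then show "gam \<theta> N k \<le> 1 - dl \<theta> N k" using g x_def by simp
  then show "gam \<theta> N k \<le> 1" using x x_def by simp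
  have "1 - (1 - x) / (1 + x) = 2 * x / (1 + x)" using x by (simp add: field_simps)
  also have "\<dots> \<le> 2 * x" using x by (simp add: divide_le_eq algebra_simps)
  finally show "1 - gam \<theta> N k \<le> 2 * dl \<theta> N k" using g x_def by simp
qed

lemma GG_bounds:
  assumes th: "\<theta> \<ge> 1" and "k \<le> i" "i \<le> N"
  shows "0 \<le> GG \<theta> N k i" "GG \<theta> N k i \<le> 1"
proof -
  have "\<forall>l\<in>{k<..i}. 0 \<le> gam \<theta> N l \<and> gam \<theta> N l \<le> 1"
    using gam_basic[OF th] assms by auto
  then show "0 \<le> GG \<theta> N k i" "GG \<theta> N k i \<le> 1" unfolding GG_def
    by (auto intro: prod_nonneg prod_le_1)
qed

lemma one_minus_prod_le:
  fixes f :: "'a \<Rightarrow> real"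
  assumes "finite A" "\<And>x. x \<in> A \<Longrightarrow> 0 \<le> f x \<and> f x \<le> 1"
  shows "1 - (\<Prod>x\<in>A. f x) \<le> (\<Sum>x\<in>A. 1 - f x)"
  using assms
proof (induction A rule: finite_induct)
  case empty then show ?case by simp
next
  case (insert a A)
  have P: "0 \<le> (\<Prod>x\<in>A. f x)" "(\<Prod>x\<in>A. f x) \<le> 1" using insert.prems by (auto intro: prod_nonneg prod_le_1)
  have fa: "0 \<le> f a" "f a \<le> 1" using insert.prems by auto
  have "1 - f a * (\<Prod>x\<in>A. f x) = (1 - f a) * (\<Prod>x\<in>A. f x) + (1 - (\<Prod>x\<in>A. f x))" by (simp add: algebra_simps)
  also have "\<dots> \<le> (1 - f a) + (1 - (\<Prod>x\<in>A. f x))"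
    using P fa by (intro add_right_mono) (simp add: mult_left_le)
  also have "\<dots> \<le> (1 - f a) + (\<Sum>x\<in>A. 1 - f x)" using insert.IH insert.prems by simp
  finally show ?case using insert.hyps by simp
qed


lemma A_bound:
  assumes th: "\<theta> \<ge> 1"
  shows "2 \<le> i \<Longrightarrow> i \<le> N \<Longrightarrow> (\<Sum>k\<in>{3..i}. (GG \<theta> N k i)\<^sup>2) \<le> 1 / dl \<theta> N i"
proof (induction i)
  case 0 then show ?case by simp
next
  case (Suc i)
  have dpos: "0 < dl \<theta> N (Suc i)" "dl \<theta> N (Suc i) \<le> 1" using dl_basic[OF th, of "Suc i" N] Suc.prems by auto
  show ?case
  proof (cases "Suc i = 2")
    case True
    then have "{3..Suc i} = {}" by auto
    then show ?thesis using dpos by simp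
  next
    case False
    then have i: "2 \<le> i" "i \<le> N" using Suc.prems by auto
    have IH: "(\<Sum>k\<in>{3..i}. (GG \<theta> N k i)\<^sup>2) \<le> 1 / dl \<theta> N i" by (rule Suc.IH[OF i])
    define D where "D = dl \<theta> N (Suc i)"
    have D: "0 < D" "D \<le> 1" using dpos unfolding D_def by auto
    have Di: "D \<le> dl \<theta> N i" unfolding D_def by (rule dl_mono[OF th]) simp
    have g: "0 \<le> gam \<theta> N (Suc i)" "gam \<theta> N (Suc i) \<le> 1 - D"
      using gam_basic[OF th, of "Suc i" N] Suc.prems unfolding D_def by auto
    have e: "{3..Suc i} = insert (Suc i) {3..i}" using False Suc.prems by auto
    have "(\<Sum>k\<in>{3..Suc i}. (GG \<theta> N k (Suc i))\<^sup>2) = 1 + (\<Sum>k\<in>{3..i}. (GG \<theta> N k (Suc i))\<^sup>2)"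
      unfolding e by simp
    also have "(\<Sum>k\<in>{3..i}. (GG \<theta> N k (Suc i))\<^sup>2) = (gam \<theta> N (Suc i))\<^sup>2 * (\<Sum>k\<in>{3..i}. (GG \<theta> N k i)\<^sup>2)"
      unfolding sum_distrib_left by (intro sum.cong) (auto simp: GG_Suc power_mult_distrib)
    also have "\<dots> \<le> (1 - D)\<^sup>2 * (1 / D)"
    proof (rule mult_mono)
      show "(gam \<theta> N (Suc i))\<^sup>2 \<le> (1 - D)\<^sup>2" using g by (intro power_mono) auto
      have "1 / dl \<theta> N i \<le> 1 / D" using D Di by (intro divide_left_mono) auto
      then show "(\<Sum>k\<in>{3..i}. (GG \<theta> N k i)\<^sup>2) \<le> 1 / D" using IH by linarith
    qed (use D in \<open>auto intro: sum_nonneg\<close>)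
    also have "1 + (1 - D)\<^sup>2 * (1 / D) \<le> 1 / D"
    proof -
      have "1 + (1 - D)\<^sup>2 * (1 / D) = (1 - D + D\<^sup>2) / D" using D by (simp add: field_simps power2_eq_square)
      also have "\<dots> \<le> 1 / D" using D by (intro divide_right_mono) (auto simp: power2_eq_square mult_le_cancel_left1)
      finally show ?thesis .
    qed
    finally show ?thesis unfolding D_def by simp
  qed
qed

lemma wL_bounds:
  assumes th: "\<theta> \<ge> 1" and "i \<le> N"
  shows "0 \<le> wL \<theta> N i k" "wL \<theta> N i k \<le> 1"
  using GG_bounds[OF th, of k i N] assms unfolding wL_def by auto

lemma wL_sq_sum:
  assumes th: "\<theta> \<ge> 1" and "2 \<le> i" "i \<le> N"
  shows "(\<Sum>k\<in>{3..N}. (wL \<theta> N i k)\<^sup>2) \<le> 1 / dl \<theta> N i"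
proof -
  have e: "{k\<in>{3..N}. k \<le> i} = {3..i}" using assms by auto
  have "(\<Sum>k\<in>{3..N}. (wL \<theta> N i k)\<^sup>2) = (\<Sum>k\<in>{3..N}. if k \<le> i then (GG \<theta> N k i)\<^sup>2 else 0)"
    unfolding wL_def by (intro sum.cong) auto
  also have "\<dots> = (\<Sum>k\<in>{k\<in>{3..N}. k \<le> i}. (GG \<theta> N k i)\<^sup>2)"
    by (rule sum.inter_filter[symmetric]) simp
  also have "\<dots> = (\<Sum>k\<in>{3..i}. (GG \<theta> N k i)\<^sup>2)" unfolding e ..
  finally show ?thesis using A_bound[OF th assms(2,3)] by simp
qed

lemma incr_bound:
  assumes th: "\<theta> \<ge> 1" and i: "3 \<le> i" "i \<le> s" "s \<le> N"
  shows "(\<Sum>k\<in>{3..N}. (wL \<theta> N s k - wL \<theta> N i k)\<^sup>2) \<le> 3 * real (s - i)"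
proof -
  define G where "G = GG \<theta> N i s"
  define A where "A = (\<Sum>k\<in>{3..i}. (GG \<theta> N k i)\<^sup>2)"
  define D where "D = dl \<theta> N i"
  define d where "d = real (s - i)"
  have D: "0 < D" "D \<le> 1" using dl_basic[OF th, of i N] i unfolding D_def by auto
  have A: "A \<le> 1 / D" unfolding A_def D_def by (rule A_bound[OF th]) (use i in auto)
  have G: "0 \<le> G" "G \<le> 1" unfolding G_def using GG_bounds[OF th, of i s N] i by auto
  have pt: "(wL \<theta> N s k - wL \<theta> N i k)\<^sup>2 \<le> (if k \<le> i then (1 - G)\<^sup>2 * (GG \<theta> N k i)\<^sup>2 else 0) + (if i < k \<and> k \<le> s then 1 else 0)" for k
  proof (cases "k \<le> i")
    case True
    then have "wL \<theta> N s k - wL \<theta> N i k = GG \<theta> N k i * (G - 1)"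
      using i unfolding wL_def G_def by (simp add: GG_trans[of k i s] algebra_simps)
    then show ?thesis using True by (simp add: power_mult_distrib power2_commute)
  next
    case False
    show ?thesis
    proof (cases "k \<le> s")
      case True
      have "0 \<le> GG \<theta> N k s" "GG \<theta> N k s \<le> 1" using GG_bounds[OF th, of k s N] True i by auto
      then have "(GG \<theta> N k s)\<^sup>2 \<le> 1" by (simp add: abs_square_le_1)
      then show ?thesis using True False unfolding wL_def by simp
    next
      case False2: False
      then show ?thesis using False unfolding wL_def by simp
    qed
  qed
  have "(\<Sum>k\<in>{3..N}. (wL \<theta> N s k - wL \<theta> N i k)\<^sup>2) \<le> (\<Sum>k\<in>{3..N}. (if k \<le> i then (1 - G)\<^sup>2 * (GG \<theta> N k i)\<^sup>2 else 0) + (if i < k \<and> k \<le> s then 1 else 0))"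
    by (intro sum_mono pt)
  also have "\<dots> = (1 - G)\<^sup>2 * A + d"
  proof -
    have e1: "{k\<in>{3..N}. k \<le> i} = {3..i}" using i by auto
    have e2: "{k\<in>{3..N}. i < k \<and> k \<le> s} = {i<..s}" using i by auto
    have "(\<Sum>k\<in>{3..N}. (if k \<le> i then (1 - G)\<^sup>2 * (GG \<theta> N k i)\<^sup>2 else 0)) = (\<Sum>k\<in>{k\<in>{3..N}. k \<le> i}. (1 - G)\<^sup>2 * (GG \<theta> N k i)\<^sup>2)"
      by (rule sum.inter_filter[symmetric]) simp
    moreover have "(\<Sum>k\<in>{3..N}. (if i < k \<and> k \<le> s then 1 else 0)) = (\<Sum>k\<in>{k\<in>{3..N}. i < k \<and> k \<le> s}. (1::real))"
      by (rule sum.inter_filter[symmetric]) simp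
    ultimately have "(\<Sum>k\<in>{3..N}. (if k \<le> i then (1 - G)\<^sup>2 * (GG \<theta> N k i)\<^sup>2 else 0)) = (\<Sum>k\<in>{3..i}. (1 - G)\<^sup>2 * (GG \<theta> N k i)\<^sup>2)"
       "(\<Sum>k\<in>{3..N}. (if i < k \<and> k \<le> s then 1 else 0)) = (\<Sum>k\<in>{i<..s}. (1::real))"
      unfolding e1 e2 by auto
    then show ?thesis by (simp add: sum.distrib A_def d_def sum_distrib_left)
  qed
  also have "(1 - G)\<^sup>2 * A \<le> 2 * d"
  proof -
    have oneG: "1 - G \<le> 2 * d * D"
    proof -
      have "1 - G \<le> (\<Sum>l\<in>{i<..s}. 1 - gam \<theta> N l)"
        unfolding G_def GG_def by (rule one_minus_prod_le) (use gam_basic[OF th] i in auto)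
      also have "\<dots> \<le> (\<Sum>l\<in>{i<..s}. 2 * D)"
      proof (intro sum_mono)
        fix l assume l: "l \<in> {i<..s}"
        have "1 - gam \<theta> N l \<le> 2 * dl \<theta> N l" using gam_basic[OF th, of l N] l i by auto
        also have "dl \<theta> N l \<le> D" unfolding D_def by (rule dl_mono[OF th]) (use l in auto)
        finally show "1 - gam \<theta> N l \<le> 2 * D" by simp
      qed
      also have "\<dots> = 2 * d * D" by (simp add: d_def)
      finally show ?thesis .
    qed
    have A0: "0 \<le> A" unfolding A_def by (intro sum_nonneg) auto
    show ?thesis
    proof (cases "2 * d * D \<ge> 1")
      case True
      have "(1 - G)\<^sup>2 * A \<le> 1 * (1 / D)"
        by (rule mult_mono) (use G A A0 in \<open>auto simp: abs_square_le_1\<close>)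
      also have "\<dots> \<le> 2 * d" using True D by (simp add: divide_le_eq mult.commute)
      finally show ?thesis .
    next
      case False
      have "(1 - G)\<^sup>2 * A \<le> (2 * d * D)\<^sup>2 * (1 / D)"
        by (rule mult_mono) (use G A A0 oneG in \<open>auto intro: power_mono\<close>)
      also have "\<dots> = 2 * d * (2 * d * D)" using D by (simp add: power2_eq_square field_simps)
      also have "\<dots> \<le> 2 * d * 1" using False by (intro mult_left_mono) (auto simp: d_def)
      finally show ?thesis by simp
    qed
  qed
  finally show ?thesis by (simp add: d_def)
qed

definition TT :: "real \<Rightarrow> nat \<Rightarrow> real \<Rightarrow> real \<Rightarrow> real" where
  "TT \<alpha> N t S = 2 * exp (- (t\<^sup>2 * real N / (16 * \<alpha> * S))) + 2 * exp (- (t * sqrt (real N) / (4 * \<alpha>)))"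

lemma Zw_diff: "Zw \<theta> N (\<lambda>k. w1 k - w2 k) av bv = Zw \<theta> N w1 av bv - Zw \<theta> N w2 av bv"
  by (simp add: Zw_def sum_subtractf algebra_simps)

lemma main_bound:
  fixes M :: "'s measure" and a b :: "nat \<Rightarrow> 's \<Rightarrow> real"
  assumes P: "prob_space M" and \<alpha>: "\<alpha> > 0"
    and indep: "prob_space.indep_vars M (\<lambda>_. borel) (\<lambda>j. case j of Inl i \<Rightarrow> a i | Inr i \<Rightarrow> b i) (Inl ` {1..N} \<union> Inr ` {1..N-1})"
    and a_distr: "\<And>i. 1 \<le> i \<Longrightarrow> i \<le> N \<Longrightarrow> distributed M lborel (a i) (\<lambda>x. ennreal (normal_density 0 (sqrt \<alpha>) x))"
    and b_distr: "\<And>i. 1 \<le> i \<Longrightarrow> i \<le> N - 1 \<Longrightarrow> distributed M lborel (\<lambda>x. (2 / \<alpha>) * (b i x)\<^sup>2) (\<lambda>x. ennreal (chi2_density (2 * real i / \<alpha>) x))"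
    and th: "\<theta> \<ge> 1" and N: "N \<ge> 3" and t: "t > 0" and \<eta>: "\<eta> > 0" and h: "h \<ge> 1"
    and KK: "\<And>i. i \<in> {3..N} \<Longrightarrow> dl \<theta> N i < \<eta> \<Longrightarrow> N - i < K * h"
  shows "measure M {x \<in> space M. \<exists>i\<in>{3..N}. \<bar>LL \<theta> N (\<lambda>i. a i x) (\<lambda>i. b i x) i\<bar> > 2 * t}
     \<le> real N * TT \<alpha> N t (1 / \<eta>) + real K * TT \<alpha> N t (1 / dl \<theta> N N) + real N * TT \<alpha> N t (3 * real h)"
proof -
  interpret prob_space M by (rule P)
  define F where "F w = {x \<in> space M. \<bar>Zw \<theta> N w (\<lambda>i. a i x) (\<lambda>i. b i x)\<bar> \<ge> t}" for w
  define B where "B = {i\<in>{3..N}. dl \<theta> N i \<ge> \<eta>}"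
  define T where "T = {i\<in>{3..N}. dl \<theta> N i < \<eta>}"
  define sa where "sa i = N - h * ((N - i) div h)" for i
  define A where "A = sa ` T"
  have Fm: "F w \<in> sets M" for w
  proof -
    have "(\<lambda>x. Zw \<theta> N w (\<lambda>i. a i x) (\<lambda>i. b i x)) \<in> borel_measurable M" by (rule Zw_meas[OF P indep])
    then show ?thesis unfolding F_def by measurable
  qed
  have sa: "i \<le> sa i" "sa i \<le> N" "sa i - i \<le> h" if "i \<in> {3..N}" for i
  proof -
    have hd: "h * ((N - i) div h) \<le> N - i" by (simp add: mult.commute)
    have iN: "i \<le> N" using that by auto
    show "i \<le> sa i" using hd iN unfolding sa_def by arith
    show "sa i \<le> N" unfolding sa_def by simp
    define q where "q = (N - i) div h"
    have "sa i - i = (N - i) - q * h" unfolding sa_def q_def[symmetric] using hd iN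
      unfolding q_def[symmetric] by (simp add: mult.commute)
    also have "\<dots> = (N - i) mod h" unfolding q_def by (rule minus_div_mult_eq_mod)
    also have "\<dots> < h" using h by simp
    finally show "sa i - i \<le> h" by simp
  qed
  have AK: "card A \<le> K"
  proof -
    have "A \<subseteq> (\<lambda>j. N - h * j) ` {..<K}"
    proof
      fix s assume "s \<in> A"
      then obtain i where i: "i \<in> T" "s = sa i" unfolding A_def by auto
      then have "N - i < K * h" using KK unfolding T_def by auto
      then have "(N - i) div h < K" using h by (simp add: div_less_iff_less_mult)
      then show "s \<in> (\<lambda>j. N - h * j) ` {..<K}" using i unfolding sa_def by auto
    qed
    then have "card A \<le> card ((\<lambda>j. N - h * j) ` {..<K})" by (intro card_mono) auto
    also have "\<dots> \<le> card {..<K}" by (rule card_image_le) simp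
    finally show ?thesis by simp
  qed
  have A3: "A \<subseteq> {3..N}" unfolding A_def T_def using sa by fastforce
  have cardB: "card B \<le> N" and cardT: "card T \<le> N"
  proof -
    have "card B \<le> card {3..N}" "card T \<le> card {3..N}" unfolding B_def T_def by (intro card_mono; auto)+
    then show "card B \<le> N" "card T \<le> N" by auto
  qed
  have Lrep: "LL \<theta> N (\<lambda>i. a i x) (\<lambda>i. b i x) i = Zw \<theta> N (wL \<theta> N i) (\<lambda>i. a i x) (\<lambda>i. b i x)" if "i \<le> N" for i x
    using LL_Zw[OF that] .
  have sub: "{x \<in> space M. \<exists>i\<in>{3..N}. \<bar>LL \<theta> N (\<lambda>i. a i x) (\<lambda>i. b i x) i\<bar> > 2 * t}
     \<subseteq> (\<Union>i\<in>B. F (wL \<theta> N i)) \<union> (\<Union>s\<in>A. F (wL \<theta> N s)) \<union> (\<Union>i\<in>T. F (\<lambda>k. wL \<theta> N (sa i) k - wL \<theta> N i k))"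
  proof
    fix x assume "x \<in> {x \<in> space M. \<exists>i\<in>{3..N}. \<bar>LL \<theta> N (\<lambda>i. a i x) (\<lambda>i. b i x) i\<bar> > 2 * t}"
    then obtain i where x: "x \<in> space M" and i: "i \<in> {3..N}" and big: "\<bar>LL \<theta> N (\<lambda>i. a i x) (\<lambda>i. b i x) i\<bar> > 2 * t" by auto
    define Zi where "Zi = Zw \<theta> N (wL \<theta> N i) (\<lambda>i. a i x) (\<lambda>i. b i x)"
    define Zs where "Zs = Zw \<theta> N (wL \<theta> N (sa i)) (\<lambda>i. a i x) (\<lambda>i. b i x)"
    have Zi: "\<bar>Zi\<bar> > 2 * t" using big Lrep[of i x] i unfolding Zi_def by auto
    show "x \<in> (\<Union>i\<in>B. F (wL \<theta> N i)) \<union> (\<Union>s\<in>A. F (wL \<theta> N s)) \<union> (\<Union>i\<in>T. F (\<lambda>k. wL \<theta> N (sa i) k - wL \<theta> N i k))"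
    proof (cases "dl \<theta> N i \<ge> \<eta>")
      case True
      then have "i \<in> B" using i unfolding B_def by auto
      moreover have "x \<in> F (wL \<theta> N i)" using x Zi t unfolding F_def Zi_def by auto
      ultimately show ?thesis by blast
    next
      case False
      then have iT: "i \<in> T" using i unfolding T_def by auto
      have "\<bar>Zi\<bar> \<le> \<bar>Zs\<bar> + \<bar>Zs - Zi\<bar>" by linarith
      then have "\<bar>Zs\<bar> \<ge> t \<or> \<bar>Zs - Zi\<bar> \<ge> t" using Zi by linarith
      then show ?thesis
      proof
        assume "\<bar>Zs\<bar> \<ge> t"
        then have "x \<in> F (wL \<theta> N (sa i))" using x unfolding F_def Zs_def by auto
        moreover have "sa i \<in> A" using iT unfolding A_def by auto
        ultimately show ?thesis by blast
      next
        assume "\<bar>Zs - Zi\<bar> \<ge> t"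
        then have "x \<in> F (\<lambda>k. wL \<theta> N (sa i) k - wL \<theta> N i k)" using x unfolding F_def Zs_def Zi_def Zw_diff by auto
        then show ?thesis using iT by blast
      qed
    qed
  qed
  have tailB: "measure M (F (wL \<theta> N i)) \<le> TT \<alpha> N t (1 / \<eta>)" if "i \<in> B" for i
  proof -
    have i: "i \<in> {3..N}" "dl \<theta> N i \<ge> \<eta>" using that unfolding B_def by auto
    have "(\<Sum>k\<in>{3..N}. (wL \<theta> N i k)\<^sup>2) \<le> 1 / dl \<theta> N i" by (rule wL_sq_sum[OF th]) (use i in auto)
    also have "\<dots> \<le> 1 / \<eta>" using i \<eta> by (intro divide_left_mono) auto
    finally have S: "(\<Sum>k\<in>{3..N}. (wL \<theta> N i k)\<^sup>2) \<le> 1 / \<eta>" .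
    show ?thesis unfolding F_def TT_def
      by (rule tail_abs[OF P \<alpha> indep a_distr b_distr th N _ S _ t])
         (use wL_bounds[OF th, of i N] i \<eta> in auto)
  qed
  have tailA: "measure M (F (wL \<theta> N s)) \<le> TT \<alpha> N t (1 / dl \<theta> N N)" if "s \<in> A" for s
  proof -
    have s: "s \<in> {3..N}" using that A3 by auto
    have dN: "0 < dl \<theta> N N" using dl_basic[OF th, of N N] N by auto
    have ds: "0 < dl \<theta> N s" using dl_basic[OF th, of s N] s by auto
    have "(\<Sum>k\<in>{3..N}. (wL \<theta> N s k)\<^sup>2) \<le> 1 / dl \<theta> N s" by (rule wL_sq_sum[OF th]) (use s in auto)
    also have "\<dots> \<le> 1 / dl \<theta> N N" using dN ds s by (intro divide_left_mono dl_mono[OF th]) auto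
    finally have S: "(\<Sum>k\<in>{3..N}. (wL \<theta> N s k)\<^sup>2) \<le> 1 / dl \<theta> N N" .
    show ?thesis unfolding F_def TT_def
      by (rule tail_abs[OF P \<alpha> indep a_distr b_distr th N _ S _ t])
         (use wL_bounds[OF th, of s N] s dN in auto)
  qed
  have tailT: "measure M (F (\<lambda>k. wL \<theta> N (sa i) k - wL \<theta> N i k)) \<le> TT \<alpha> N t (3 * real h)" if "i \<in> T" for i
  proof -
    have i: "i \<in> {3..N}" using that unfolding T_def by auto
    note sai = sa[OF i]
    have "(\<Sum>k\<in>{3..N}. (wL \<theta> N (sa i) k - wL \<theta> N i k)\<^sup>2) \<le> 3 * real (sa i - i)"
      by (rule incr_bound[OF th]) (use i sai in auto)
    also have "\<dots> \<le> 3 * real h" using sai by simp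
    finally have S: "(\<Sum>k\<in>{3..N}. (wL \<theta> N (sa i) k - wL \<theta> N i k)\<^sup>2) \<le> 3 * real h" .
    have W: "\<bar>wL \<theta> N (sa i) k - wL \<theta> N i k\<bar> \<le> 1" for k
      using wL_bounds[OF th, of "sa i" N k] wL_bounds[OF th, of i N k] i sai by auto
    show ?thesis unfolding F_def TT_def
      by (rule tail_abs[OF P \<alpha> indep a_distr b_distr th N _ S _ t]) (use W h in auto)
  qed
  have TTnn: "0 \<le> TT \<alpha> N t S" for S unfolding TT_def by simp
  have "measure M {x \<in> space M. \<exists>i\<in>{3..N}. \<bar>LL \<theta> N (\<lambda>i. a i x) (\<lambda>i. b i x) i\<bar> > 2 * t}
      \<le> measure M ((\<Union>i\<in>B. F (wL \<theta> N i)) \<union> (\<Union>s\<in>A. F (wL \<theta> N s)) \<union> (\<Union>i\<in>T. F (\<lambda>k. wL \<theta> N (sa i) k - wL \<theta> N i k)))"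
    by (rule finite_measure_mono[OF sub]) (use Fm in auto)
  also have "\<dots> \<le> measure M ((\<Union>i\<in>B. F (wL \<theta> N i)) \<union> (\<Union>s\<in>A. F (wL \<theta> N s))) + measure M (\<Union>i\<in>T. F (\<lambda>k. wL \<theta> N (sa i) k - wL \<theta> N i k))"
    by (rule measure_Un_le) (use Fm in \<open>auto simp: B_def A_def T_def\<close>)
  also have "measure M ((\<Union>i\<in>B. F (wL \<theta> N i)) \<union> (\<Union>s\<in>A. F (wL \<theta> N s))) \<le> measure M (\<Union>i\<in>B. F (wL \<theta> N i)) + measure M (\<Union>s\<in>A. F (wL \<theta> N s))"
    by (rule measure_Un_le) (use Fm in \<open>auto simp: B_def A_def T_def\<close>)
  also have "measure M (\<Union>i\<in>B. F (wL \<theta> N i)) \<le> (\<Sum>i\<in>B. measure M (F (wL \<theta> N i)))"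
    by (rule measure_UNION_le) (use Fm in \<open>auto simp: B_def\<close>)
  also have "\<dots> \<le> (\<Sum>i\<in>B. TT \<alpha> N t (1 / \<eta>))" by (intro sum_mono tailB)
  also have "\<dots> \<le> real N * TT \<alpha> N t (1 / \<eta>)" using cardB TTnn by (simp add: mult_right_mono)
  also have "measure M (\<Union>s\<in>A. F (wL \<theta> N s)) \<le> (\<Sum>s\<in>A. measure M (F (wL \<theta> N s)))"
    by (rule measure_UNION_le) (use Fm in \<open>auto simp: A_def T_def\<close>)
  also have "\<dots> \<le> (\<Sum>s\<in>A. TT \<alpha> N t (1 / dl \<theta> N N))" by (intro sum_mono tailA)
  also have "\<dots> \<le> real K * TT \<alpha> N t (1 / dl \<theta> N N)" using AK TTnn by (simp add: mult_right_mono)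
  also have "measure M (\<Union>i\<in>T. F (\<lambda>k. wL \<theta> N (sa i) k - wL \<theta> N i k)) \<le> (\<Sum>i\<in>T. measure M (F (\<lambda>k. wL \<theta> N (sa i) k - wL \<theta> N i k)))"
    by (rule measure_UNION_le) (use Fm in \<open>auto simp: T_def\<close>)
  also have "\<dots> \<le> (\<Sum>i\<in>T. TT \<alpha> N t (3 * real h))" by (intro sum_mono tailT)
  also have "\<dots> \<le> real N * TT \<alpha> N t (3 * real h)" using cardT TTnn by (simp add: mult_right_mono)
  finally show ?thesis by simp
qed

lemma lnln_lemma:
  fixes w :: "nat \<Rightarrow> real"
  assumes w: "\<And>N. w N > 0" and lim: "((\<lambda>N. (ln (ln (real N)))\<^sup>2 / w N) \<longlongrightarrow> 0) sequentially" and c: "c > 0"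
  shows "((\<lambda>N. (8 * (ln (real N))^8 + 1) * exp (- c * sqrt (w N))) \<longlongrightarrow> 0) sequentially"
proof (rule tendsto_sandwich[of "\<lambda>_. 0" _ _ "\<lambda>N. 9 / (ln (real N))^8"])
  show "eventually (\<lambda>N. 0 \<le> (8 * (ln (real N))^8 + 1) * exp (- c * sqrt (w N))) sequentially"
    by (intro always_eventually allI mult_nonneg_nonneg) (auto simp: zero_le_even_power)
  show "((\<lambda>_. 0) \<longlongrightarrow> (0::real)) sequentially" by simp
  show "((\<lambda>N. 9 / (ln (real N))^8) \<longlongrightarrow> 0) sequentially" by real_asymp
  have ev1: "eventually (\<lambda>N. (ln (ln (real N)))\<^sup>2 / w N < (c/16)\<^sup>2) sequentially"
    using lim c by (intro order_tendstoD(2)) auto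
  have ev2: "eventually (\<lambda>N. 1 \<le> ln (real N)) sequentially" by real_asymp
  show "eventually (\<lambda>N. (8 * (ln (real N))^8 + 1) * exp (- c * sqrt (w N)) \<le> 9 / (ln (real N))^8) sequentially"
    using ev1 ev2
  proof eventually_elim
    case (elim N)
    define L where "L = ln (real N)"
    define u where "u = ln L"
    have L: "1 \<le> L" using elim unfolding L_def by simp
    have u: "0 \<le> u" using L unfolding u_def by simp
    have wN: "w N > 0" by (rule w)
    have "u\<^sup>2 < (c/16)\<^sup>2 * w N" using elim wN unfolding u_def L_def by (simp add: divide_less_eq)
    then have "sqrt (u\<^sup>2) < sqrt ((c/16)\<^sup>2 * w N)" by (rule real_sqrt_less_mono)
    then have "u < (c/16) * sqrt (w N)" using u c by (simp add: real_sqrt_mult)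
    then have cu: "- c * sqrt (w N) \<le> - 16 * u" by simp
    have "exp (- c * sqrt (w N)) \<le> exp (- 16 * u)" using cu by simp
    also have "exp (- 16 * u) = 1 / L^16"
    proof -
      have "exp (real 16 * u) = exp u ^ 16" by (rule exp_of_nat_mult)
      also have "exp u = L" using L unfolding u_def by simp
      finally have "exp (16 * u) = L^16" by simp
      then show ?thesis by (simp add: exp_minus field_simps)
    qed
    finally have E: "exp (- c * sqrt (w N)) \<le> 1 / L^16" .
    have "(8 * L^8 + 1) * exp (- c * sqrt (w N)) \<le> (9 * L^8) * (1 / L^16)"
    proof (rule mult_mono)
      have "1 \<le> L^8" using L by (simp add: one_le_power)
      then show "8 * L^8 + 1 \<le> 9 * L^8" by simp
    qed (use E L in auto)
    also have "\<dots> = 9 / L^8" using L by (simp add: field_simps power_add[symmetric])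
    finally show ?case unfolding L_def .
  qed
qed


lemma TT_nonneg: "0 \<le> TT \<alpha> N t S" unfolding TT_def by simp

lemma TT_mono:
  assumes "\<alpha> > 0" "0 < S" "S \<le> S'"
  shows "TT \<alpha> N t S \<le> TT \<alpha> N t S'"
proof -
  have X: "0 \<le> t\<^sup>2 * real N" by simp
  have "t\<^sup>2 * real N / (16 * \<alpha> * S') \<le> t\<^sup>2 * real N / (16 * \<alpha> * S)"
    using assms X by (intro divide_left_mono mult_pos_pos mult_left_mono) auto
  then show ?thesis unfolding TT_def by simp
qed

theorem lemma6:
  fixes M :: "'s measure" and \<alpha> :: real
    and a b :: "nat \<Rightarrow> nat \<Rightarrow> 's \<Rightarrow> real" and w :: "nat \<Rightarrow> real"
  assumes "prob_space M"
    and "\<alpha> > 0"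
    and indep: "\<And>N. prob_space.indep_vars M (\<lambda>_. borel)
            (\<lambda>j. case j of Inl i \<Rightarrow> a N i | Inr i \<Rightarrow> b N i)
            (Inl ` {1..N} \<union> Inr ` {1..N-1})"
    and a_distr: "\<And>N i. 1 \<le> i \<Longrightarrow> i \<le> N \<Longrightarrow>
            distributed M lborel (a N i) (\<lambda>x. ennreal (normal_density 0 (sqrt \<alpha>) x))"
    and b_nonneg: "\<And>N i x. 1 \<le> i \<Longrightarrow> i \<le> N - 1 \<Longrightarrow> x \<in> space M \<Longrightarrow> b N i x \<ge> 0"
    and b_distr: "\<And>N i. 1 \<le> i \<Longrightarrow> i \<le> N - 1 \<Longrightarrow>
            distributed M lborel (\<lambda>x. (2 / \<alpha>) * (b N i x)\<^sup>2)
              (\<lambda>x. ennreal (chi2_density (2 * real i / \<alpha>) x))"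
    and "\<And>N. w N > 0"
    and "((\<lambda>N. (ln (ln (real N)))\<^sup>2 / w N) \<longlongrightarrow> 0) sequentially"
    and "((\<lambda>N. w N / (ln (real N))\<^sup>2) \<longlongrightarrow> 0) sequentially"
  shows "o_P M (\<lambda>N x. MAX i\<in>{3..N}. \<bar>LL (theta w N) N (\<lambda>i. a N i x) (\<lambda>i. b N i x) i\<bar>)
             (\<lambda>N. real N powr (-1/3))"
proof -
  note P = assms(1) and \<alpha> = assms(2) and wpos = assms(7) and lim1 = assms(8) and lim2 = assms(9)
  interpret prob_space M by (rule P)
  show ?thesis unfolding o_P_def
  proof (intro allI impI)
    fix \<epsilon> :: real assume \<epsilon>: "\<epsilon> > 0"
    define m where "m N = real N powr (1/3)" for N
    define L where "L N = ln (real N)" for N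
    define \<theta> where "\<theta> N = theta w N" for N
    define t where "t N = \<epsilon> / (2 * m N)" for N
    define \<eta> where "\<eta> N = (L N)\<^sup>2 / m N" for N
    define xh where "xh N = m N / (L N)^4" for N
    define h where "h N = nat \<lfloor>xh N\<rfloor>" for N
    define K where "K N = nat \<lceil>real N * (\<theta> N)\<^sup>2 * (\<eta> N)\<^sup>2 / real (h N)\<rceil>" for N
    define c where "c = \<epsilon>\<^sup>2 / (64 * \<alpha> * sqrt 2)"
    have c: "c > 0" using \<epsilon> \<alpha> by (simp add: c_def)
    define bnd where "bnd N = real N * TT \<alpha> N (t N) (1 / \<eta> N)
        + ((8 * (L N)^8 + 1) * (2 * exp (- c * sqrt (w N))) + (8 * (L N)^8 + 1) * (2 * exp (- (t N * sqrt (real N) / (4 * \<alpha>)))))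
        + real N * TT \<alpha> N (t N) (3 * xh N)" for N
    have lim_bnd: "bnd \<longlonglongrightarrow> 0"
    proof -
      have A: "(\<lambda>N. real N * TT \<alpha> N (t N) (1 / \<eta> N)) \<longlonglongrightarrow> 0"
        unfolding t_def \<eta>_def m_def L_def TT_def using \<alpha> \<epsilon> by real_asymp
      have B1: "(\<lambda>N. (8 * (L N)^8 + 1) * (2 * exp (- c * sqrt (w N)))) \<longlonglongrightarrow> 0"
      proof -
        have "(\<lambda>N. 2 * ((8 * (L N)^8 + 1) * exp (- c * sqrt (w N)))) \<longlonglongrightarrow> 2 * 0"
          unfolding L_def by (intro tendsto_mult tendsto_const lnln_lemma[OF wpos lim1 c])
        then show ?thesis by (simp add: mult_ac)
      qed
      have B2: "(\<lambda>N. (8 * (L N)^8 + 1) * (2 * exp (- (t N * sqrt (real N) / (4 * \<alpha>))))) \<longlonglongrightarrow> 0"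
        unfolding t_def m_def L_def using \<alpha> \<epsilon> by real_asymp
      have C: "(\<lambda>N. real N * TT \<alpha> N (t N) (3 * xh N)) \<longlonglongrightarrow> 0"
        unfolding t_def xh_def m_def L_def TT_def using \<alpha> \<epsilon> by real_asymp
      show ?thesis unfolding bnd_def using tendsto_add_zero[OF tendsto_add_zero[OF A tendsto_add_zero[OF B1 B2]] C] by simp
    qed
    have E1: "eventually (\<lambda>N. 3 \<le> N) sequentially" by (rule eventually_ge_at_top)
    have E2: "eventually (\<lambda>N. 2 \<le> xh N) sequentially" unfolding xh_def m_def L_def by real_asymp
    have E3: "eventually (\<lambda>N. w N < (L N)\<^sup>2) sequentially"
    proof -
      have "eventually (\<lambda>N. w N / (ln (real N))\<^sup>2 < 1) sequentially"
        using lim2 by (intro order_tendstoD(2)) auto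
      moreover have "eventually (\<lambda>N. 0 < ln (real N)) sequentially" by real_asymp
      ultimately show ?thesis unfolding L_def by eventually_elim (simp add: divide_less_eq)
    qed
    have E4: "eventually (\<lambda>N. (L N)\<^sup>2 \<le> (m N)\<^sup>2) sequentially" unfolding L_def m_def by real_asymp
    have ev: "eventually (\<lambda>N. measure M {x \<in> space M. \<epsilon> < \<bar>(MAX i\<in>{3..N}. \<bar>LL (theta w N) N (\<lambda>i. a N i x) (\<lambda>i. b N i x) i\<bar>) / real N powr (-1/3)\<bar>} \<le> bnd N) sequentially"
      using E1 E2 E3 E4
    proof eventually_elim
      case (elim N)
      have N3: "3 \<le> N" using elim by simp
      have n3: "real N \<ge> 3" using N3 by simp
      have mpos: "m N > 0" using n3 unfolding m_def by simp
      have m3: "(m N)^3 = real N"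
      proof -
        have "(m N)^3 = (m N) powr (real 3)" using mpos by (simp add: powr_realpow)
        also have "\<dots> = real N" unfolding m_def using n3 by (simp add: powr_powr)
        finally show ?thesis .
      qed
      have pm23: "real N powr (-2/3) = 1 / (m N)\<^sup>2"
      proof -
        have "(m N) powr (-2) = real N powr (-2/3)" unfolding m_def using n3 by (simp add: powr_powr)
        moreover have "(m N) powr (-2) = 1 / (m N)\<^sup>2" using mpos by (simp add: powr_minus divide_inverse)
        ultimately show ?thesis by simp
      qed
      have pm13: "real N powr (-1/3) = 1 / m N"
      proof -
        have "real N powr (-1/3) = real N powr (- (1/3))" by simp
        also have "\<dots> = inverse (real N powr (1/3))" by (rule powr_minus)
        finally show ?thesis unfolding m_def by (simp only: inverse_eq_divide)
      qed
      have Lpos: "L N > 0" using n3 unfolding L_def by simp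
      define v where "v = w N / (m N)\<^sup>2"
      have vpos: "v > 0" using wpos[of N] mpos unfolding v_def by simp
      have v1: "v \<le> 1"
      proof -
        have "w N \<le> (m N)\<^sup>2" using elim by linarith
        then show ?thesis using mpos unfolding v_def by simp
      qed
      have thv: "\<theta> N = 1 + v" unfolding \<theta>_def theta_def v_def pm23 by simp
      have th1: "\<theta> N \<ge> 1" and th2: "\<theta> N \<le> 2" using thv vpos v1 by auto
      have xh2: "xh N \<ge> 2" using elim by simp
      have hx: "real (h N) \<le> xh N" "xh N / 2 \<le> real (h N)" "1 \<le> h N"
      proof -
        have fl: "\<lfloor>xh N\<rfloor> \<ge> 2" using xh2 by (simp add: le_floor_iff)
        have rh: "real (h N) = of_int \<lfloor>xh N\<rfloor>" unfolding h_def using fl by simp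
        show "real (h N) \<le> xh N" unfolding rh by simp
        have "xh N - 1 < of_int \<lfloor>xh N\<rfloor>" by linarith
        then show "xh N / 2 \<le> real (h N)" unfolding rh using xh2 by linarith
        have "real (h N) \<ge> 1" unfolding rh using fl by linarith
        then show "1 \<le> h N" by simp
      qed
      have hpos: "real (h N) > 0" using hx by simp
      have tpos: "t N > 0" using \<epsilon> mpos unfolding t_def by simp
      have etapos: "\<eta> N > 0" using Lpos mpos unfolding \<eta>_def by simp
      define D where "D = real N * (\<theta> N)\<^sup>2"
      have DN: "real N \<le> D" unfolding D_def using th1 n3 by (simp add: one_le_power mult_le_cancel_left1)
      have Dpos: "D > 0" using DN n3 by simp
      have KK: "N - i < K N * h N" if i: "i \<in> {3..N}" and dli: "dl (\<theta> N) N i < \<eta> N" for i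
      proof -
        define q where "q = 1 - (real i - 1) / D"
        have dq: "dl (\<theta> N) N i = sqrt q" unfolding dl_def q_def D_def by simp
        have q0: "0 < sqrt q" using dl_basic[OF th1, of i N] i dq by simp
        then have qpos: "q > 0" by simp
        have "q = (sqrt q)\<^sup>2" using qpos by simp
        also have "\<dots> < (\<eta> N)\<^sup>2" using dli dq q0 by (intro power_strict_mono) auto
        finally have qe: "q < (\<eta> N)\<^sup>2" .
        have "D * q = D - (real i - 1)" unfolding q_def using Dpos by (simp add: field_simps)
        moreover have "D * q < D * (\<eta> N)\<^sup>2" using qe Dpos by (rule mult_strict_left_mono)
        ultimately have "D - (real i - 1) < D * (\<eta> N)\<^sup>2" by simp
        moreover have "real (N - i) = real N - real i" using i by simp
        ultimately have lt: "real (N - i) < D * (\<eta> N)\<^sup>2" using DN by linarith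
        have "D * (\<eta> N)\<^sup>2 = (D * (\<eta> N)\<^sup>2 / real (h N)) * real (h N)" using hpos by simp
        also have "\<dots> \<le> real (K N) * real (h N)"
          unfolding K_def D_def[symmetric] by (intro mult_right_mono real_nat_ceiling_ge) (use hpos in auto)
        finally have "real (N - i) < real (K N * h N)" using lt by simp
        then show ?thesis by (simp only: of_nat_less_iff)
      qed
      have main: "measure M {x \<in> space M. \<exists>i\<in>{3..N}. \<bar>LL (\<theta> N) N (\<lambda>i. a N i x) (\<lambda>i. b N i x) i\<bar> > 2 * t N}
          \<le> real N * TT \<alpha> N (t N) (1 / \<eta> N) + real (K N) * TT \<alpha> N (t N) (1 / dl (\<theta> N) N N) + real N * TT \<alpha> N (t N) (3 * real (h N))"
        by (rule main_bound[OF P \<alpha> indep[of N] a_distr[of _ N] b_distr[of _ N] th1 N3 tpos etapos hx(3) KK])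
      have meas: "{x \<in> space M. \<exists>i\<in>{3..N}. \<bar>LL (\<theta> N) N (\<lambda>i. a N i x) (\<lambda>i. b N i x) i\<bar> > 2 * t N} \<in> sets M"
      proof (rule sets.sets_Collect_finite_Ex)
        fix i assume i: "i \<in> {3..N}"
        have "(\<lambda>x. Zw (\<theta> N) N (wL (\<theta> N) N i) (\<lambda>i. a N i x) (\<lambda>i. b N i x)) \<in> borel_measurable M"
          by (rule Zw_meas[OF P indep[of N]])
        then have "(\<lambda>x. LL (\<theta> N) N (\<lambda>i. a N i x) (\<lambda>i. b N i x) i) \<in> borel_measurable M"
          using i by (simp add: LL_Zw)
        then show "{x \<in> space M. \<bar>LL (\<theta> N) N (\<lambda>i. a N i x) (\<lambda>i. b N i x) i\<bar> > 2 * t N} \<in> sets M"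
          by measurable
      qed simp
      have sub: "{x \<in> space M. \<epsilon> < \<bar>(MAX i\<in>{3..N}. \<bar>LL (theta w N) N (\<lambda>i. a N i x) (\<lambda>i. b N i x) i\<bar>) / real N powr (-1/3)\<bar>}
          \<subseteq> {x \<in> space M. \<exists>i\<in>{3..N}. \<bar>LL (\<theta> N) N (\<lambda>i. a N i x) (\<lambda>i. b N i x) i\<bar> > 2 * t N}"
      proof safe
        fix x assume x: "x \<in> space M" and big: "\<epsilon> < \<bar>(MAX i\<in>{3..N}. \<bar>LL (theta w N) N (\<lambda>i. a N i x) (\<lambda>i. b N i x) i\<bar>) / real N powr (-1/3)\<bar>"
        define f where "f i = \<bar>LL (theta w N) N (\<lambda>i. a N i x) (\<lambda>i. b N i x) i\<bar>" for i
        define Mx where "Mx = Max (f ` {3..N})"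
        have ne: "f ` {3..N} \<noteq> {}" using N3 by auto
        have Mx0: "0 \<le> Mx" unfolding Mx_def using N3 by (subst Max_ge_iff) (auto simp: f_def)
        have "\<epsilon> < \<bar>Mx * m N\<bar>" using big unfolding Mx_def f_def pm13 by simp
        then have "\<epsilon> < Mx * m N" using Mx0 mpos by simp
        then have "\<epsilon> / m N < Mx" using mpos by (simp add: divide_less_eq)
        moreover have "2 * t N = \<epsilon> / m N" unfolding t_def by simp
        ultimately have "2 * t N < Max (f ` {3..N})" unfolding Mx_def by simp
        then obtain i where "i \<in> {3..N}" "2 * t N < f i" using ne by (subst (asm) Max_gr_iff) auto
        then show "\<exists>i\<in>{3..N}. \<bar>LL (\<theta> N) N (\<lambda>i. a N i x) (\<lambda>i. b N i x) i\<bar> > 2 * t N"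
          unfolding f_def \<theta>_def by auto
      qed
      have Kb: "real (K N) \<le> 8 * (L N)^8 + 1"
      proof -
        define y where "y = real N * (\<theta> N)\<^sup>2 * (\<eta> N)\<^sup>2 / real (h N)"
        have y0: "0 \<le> y" unfolding y_def by simp
        have Ky: "real (K N) < y + 1"
        proof -
          have "real (K N) = of_int \<lceil>y\<rceil>" unfolding K_def y_def[symmetric] using y0 by simp
          also have "\<dots> < y + 1" by linarith
          finally show ?thesis .
        qed
        have e1: "real N * (\<theta> N)\<^sup>2 * (\<eta> N)\<^sup>2 = m N * (\<theta> N)\<^sup>2 * (L N)^4"
          unfolding \<eta>_def m3[symmetric] using mpos by (simp add: field_simps power2_eq_square eval_nat_numeral)
        have f1: "m N * (\<theta> N)\<^sup>2 * (L N)^4 \<le> m N * 4 * (L N)^4"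
        proof -
          have "(\<theta> N)\<^sup>2 \<le> 2\<^sup>2" using th1 th2 by (intro power_mono) auto
          then show ?thesis using mpos by (intro mult_right_mono mult_left_mono) auto
        qed
        have f2: "m N \<le> 2 * (L N)^4 * real (h N)"
        proof -
          have "m N / (L N)^4 / 2 \<le> real (h N)" using hx(2) unfolding xh_def .
          then show ?thesis using Lpos by (simp add: field_simps)
        qed
        have "m N * (\<theta> N)\<^sup>2 * (L N)^4 \<le> (2 * (L N)^4 * real (h N)) * 4 * (L N)^4"
          using f1 f2 Lpos by (smt (verit) mult_right_mono zero_le_power)
        also have "\<dots> = 8 * (L N)^8 * real (h N)" by (simp add: power_add[symmetric] field_simps)
        finally have "y \<le> 8 * (L N)^8" unfolding y_def e1 using hpos by (simp add: divide_le_eq)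
        then show ?thesis using Ky by simp
      qed
      have TTd: "TT \<alpha> N (t N) (1 / dl (\<theta> N) N N) \<le> 2 * exp (- c * sqrt (w N)) + 2 * exp (- (t N * sqrt (real N) / (4 * \<alpha>)))"
      proof -
        define r where "r = 1 - (real N - 1) / (real N * (\<theta> N)\<^sup>2)"
        have dlr: "dl (\<theta> N) N N = sqrt r" unfolding dl_def r_def by simp
        have t2pos: "(\<theta> N)\<^sup>2 > 0" using th1 by simp
        have r1: "(real N - 1) / (real N * (\<theta> N)\<^sup>2) \<le> 1 / (\<theta> N)\<^sup>2"
          using n3 t2pos by (simp add: divide_le_eq field_simps)
        have r2: "1 / (\<theta> N)\<^sup>2 \<le> 1 - v / 2"
        proof -
          have "(1 - v/2) * (1 + v)\<^sup>2 - 1 = v * (3 - v\<^sup>2) / 2" by (simp add: power2_eq_square field_simps)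
          moreover have "v\<^sup>2 \<le> 1" using vpos v1 by (simp add: power_le_one)
          moreover have "0 \<le> v * (3 - v\<^sup>2) / 2" using vpos \<open>v\<^sup>2 \<le> 1\<close> by simp
          ultimately have "1 \<le> (1 - v/2) * (1 + v)\<^sup>2" by linarith
          then show ?thesis unfolding thv using vpos by (simp add: divide_le_eq)
        qed
        have rv: "v / 2 \<le> r" unfolding r_def using r1 r2 by linarith
        have "sqrt (w N / 2) \<le> m N * dl (\<theta> N) N N"
        proof -
          have "w N / 2 = (m N)\<^sup>2 * (v / 2)" unfolding v_def using mpos by simp
          also have "\<dots> \<le> (m N)\<^sup>2 * r" using rv by (intro mult_left_mono) auto
          finally have "sqrt (w N / 2) \<le> sqrt ((m N)\<^sup>2 * r)" by (rule real_sqrt_le_mono)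
          also have "\<dots> = m N * sqrt r" using mpos by (simp add: real_sqrt_mult)
          finally show ?thesis unfolding dlr .
        qed
        then have key: "c * sqrt (w N) \<le> (t N)\<^sup>2 * real N / (16 * \<alpha> * (1 / dl (\<theta> N) N N))"
        proof -
          assume sw: "sqrt (w N / 2) \<le> m N * dl (\<theta> N) N N"
          have "c * sqrt (w N) = \<epsilon>\<^sup>2 / (64 * \<alpha>) * sqrt (w N / 2)"
            unfolding c_def by (simp add: real_sqrt_divide)
          also have "\<dots> \<le> \<epsilon>\<^sup>2 / (64 * \<alpha>) * (m N * dl (\<theta> N) N N)"
            using sw \<alpha> by (intro mult_left_mono) auto
          also have "\<dots> = (t N)\<^sup>2 * real N / (16 * \<alpha> * (1 / dl (\<theta> N) N N))"
            unfolding t_def m3[symmetric] using mpos \<alpha> by (simp add: field_simps power2_eq_square eval_nat_numeral)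
          finally show ?thesis .
        qed
        show ?thesis unfolding TT_def using key by simp
      qed
      have TTh: "TT \<alpha> N (t N) (3 * real (h N)) \<le> TT \<alpha> N (t N) (3 * xh N)"
        by (rule TT_mono) (use \<alpha> hx hpos in auto)
      have KT: "real (K N) * TT \<alpha> N (t N) (1 / dl (\<theta> N) N N)
          \<le> (8 * (L N)^8 + 1) * (2 * exp (- c * sqrt (w N))) + (8 * (L N)^8 + 1) * (2 * exp (- (t N * sqrt (real N) / (4 * \<alpha>))))"
      proof -
        have "real (K N) * TT \<alpha> N (t N) (1 / dl (\<theta> N) N N) \<le> (8 * (L N)^8 + 1) * (2 * exp (- c * sqrt (w N)) + 2 * exp (- (t N * sqrt (real N) / (4 * \<alpha>))))"
          by (rule mult_mono[OF Kb TTd]) (auto simp: TT_nonneg)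
        then show ?thesis by (simp add: distrib_left)
      qed
      have "measure M {x \<in> space M. \<epsilon> < \<bar>(MAX i\<in>{3..N}. \<bar>LL (theta w N) N (\<lambda>i. a N i x) (\<lambda>i. b N i x) i\<bar>) / real N powr (-1/3)\<bar>}
          \<le> measure M {x \<in> space M. \<exists>i\<in>{3..N}. \<bar>LL (\<theta> N) N (\<lambda>i. a N i x) (\<lambda>i. b N i x) i\<bar> > 2 * t N}"
        by (rule finite_measure_mono[OF sub meas])
      also have "\<dots> \<le> bnd N"
        using main KT TTh unfolding bnd_def by (smt (verit) mult_left_mono of_nat_0_le_iff)
      finally show ?case .
    qed
    show "(\<lambda>N. measure M {x \<in> space M. \<bar>(MAX i\<in>{3..N}. \<bar>LL (theta w N) N (\<lambda>i. a N i x) (\<lambda>i. b N i x) i\<bar>) / real N powr (-1/3)\<bar> > \<epsilon>}) \<longlonglongrightarrow> 0"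
      by (rule tendsto_sandwich[OF _ ev tendsto_const lim_bnd]) simp
  qed
qed

end
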